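(* Let $\epsilon\in\{-1,0,1\}$ and $f\in L^2(\Omega)$. (i) If $(u_h,\hat u_h)\in\mathbf V_h$ solves the H-IP problem, then $u_h\in V_h$ solves the UIP-DG problem. (ii) If $u_h\in V_h$ solves the UIP-DG problem and $\hat u_h$ is defined by $\hat u_h:=\{u_h\}_{\omega^\tau}-\varrho_1[\kappa\nabla_hu_h]$ on every interior face and $\hat u_h:=0$ on every boundary face, then $\hat u_h\in\hat V_h$ and $(u_h,\hat u_h)$ solves the H-IP problem; in particular, if the H-IP problem has a unique solution, $(u_h,\hat u_h)$ is that solution.
   Context: Setting. Let $\Omega\subset\mathbb R^d$, $d\in\{2,3\}$, be a bounded polyhedral Lipschitz domain. Let $\kappa:\Omega\to\mathbb R^{d\times d}$ be symmetric with $\kappa_{\min}|\xi|^2\le\xi^\top\kappa(x)\xi\le\kappa_{\max}|\xi|^2$ for all $\xi\in\mathbb R^d$ and a.e. $x$, where $0<\kappa_{\min}\le\kappa_{\max}<\infty$. Let $\mathcal T_h$ be a conforming affine simplicial mesh of $\Omega$ from a shape-regular family, with $h_E=\operatorname{diam}E$, $h=\max_Eh_E\le1$, and assume $\kappa$ is constant on each element, $\kappa_E:=\kappa|_E$. $\mathcal F_h=\mathcal F_h^i\cup\mathcal F_h^b$ is the set of faces (edges if $d=2$), split into interior and boundary faces; $\mathcal F_E$ is the set of faces of $E$, $n_{E,F}$ the unit outward normal to $F\in\mathcal F_E$, and $\eta_0:=\max_E\#\mathcal F_E$. For an interior face $F=\partial E_1\cap\partial E_2$, a subscript $i\in\{1,2\}$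 denotes the trace from $E_i$ and $n_i:=n_{E_i,F}$. $\nabla_h$ is the elementwise gradient; $(\cdot,\cdot)_{\mathcal T_h}:=\sum_E(\cdot,\cdot)_{L^2(E)}$, $\langle\cdot,\cdot\rangle_{\partial\mathcal T_h}:=\sum_E\sum_{F\in\mathcal F_E}\langle\cdot,\cdot\rangle_{L^2(F)}$ (traces from $E$), $\langle\cdot,\cdot\rangle_{\mathcal F}:=\sum_{F\in\mathcal F}\langle\cdot,\cdot\rangle_{L^2(F)}$ for a set $\mathcal F$ of faces. Fix $k\ge1$: $V_h:=\{v\in L^2(\Omega):v|_E\in\mathbb P_k(E)\ \forall E\}$, $\hat V_h:=\{\hat v\in L^2(\bigcup_{F\in\mathcal F_h}F):\hat v|_F\in\mathbb P_k(F)\ \forall F,\ \hat v|_F=0\ \forall F\in\mathcal F_h^b\}$, $\mathbf V_h:=V_h\times\hat V_h$ ($\mathbb P_k$ = polynomials of total degree $\le k$). Trace operators. For an interior face and a pair of weights $(\omega_1,\omega_2)$ with $\omega_1+\omega_2=1$ (boundary faces: $(1,0)$): $[\varphi]:=\varphi_1n_1+\varphi_2n_2$, $\{\varphi\}_\omega:=\omega_1\varphi_1+\omega_2\varphi_2$, $\{\varphi\}^*_\omega:=\omega_2\varphi_1+\omega_1\varphi_2$; on a boundary face $F\subset\partial E$: $[\varphi]:=\varphi|_En_{E,F}$, $\{\varphi\}_\omega=\{\varphi\}^*_\omega:=\varphi|_E$. Means of vector fields are componentwise; for a vector field $\mathbf b$, $[\mathbf b]:=\mathbf b_1\cdot n_1+\mathbf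 b_2\cdot n_2$ (scalar) on interior faces. HDG jump: $[\![(\varphi,\hat\varphi)]\!]|_{E,F}:=(\varphi|_E-\hat\varphi)n_{E,F}$ for $F\in\mathcal F_E$. Penalty and coefficients. Let $C_T>0$ be such that $\|w\|_{L^2(F)}^2\le C_T^2h_E^{-1}\|w\|_{L^2(E)}^2$ for all $E$, $F\in\mathcal F_E$, $w\in\mathbb P_k(E)$. Fix $\alpha_0>0$ and set $\tau|_{E,F}:=\alpha_0C_T^2\kappa_{E,F}h_E^{-1}$ with $\kappa_{E,F}:=n_{E,F}^\top\kappa_En_{E,F}$. On an interior face with $\tau_i:=\tau|_{E_i,F}$: $\omega^\tau_i:=\tau_i/(\tau_1+\tau_2)$, $\varrho_0:=\tau_1\tau_2/(\tau_1+\tau_2)$, $\varrho_1:=1/(\tau_1+\tau_2)$; on a boundary face $F\subset\partial E$: $\omega^\tau:=(1,0)$, $\varrho_0:=\tau|_{E,F}$. H-IP method. For $\epsilon\in\{-1,0,1\}$, $\sigma(v):=-\kappa\nabla_hv$, and for $\mathbf u=(u,\hat u)\in\mathbf V_h$, $\hat\sigma(\mathbf u):=\sigma(u)+\tau[\![\mathbf u]\!]$ on $\partial\mathcal T_h$ (double-valued). $\mathbf a_h^{(\epsilon)}(\mathbf u,\mathbf v):=(\kappa\nabla_hu,\nabla_hv)_{\mathcal T_h}+\langle\hat\sigma(\mathbf u),[\![\mathbf v]\!]\rangle_{\partial\mathcal T_h}+\epsilon\langle\sigma(v),[\![\mathbf u]\!]\rangle_{\partial\mathcal T_h}$ for $\mathbf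 u=(u,\hat u),\mathbf v=(v,\hat v)\in\mathbf V_h$. The H-IP problem: find $\mathbf u_h\in\mathbf V_h$ with $\mathbf a_h^{(\epsilon)}(\mathbf u_h,\mathbf v_h)=(f,v_h)_{\mathcal T_h}$ for all $\mathbf v_h=(v_h,\hat v_h)\in\mathbf V_h$. UIP-DG method. For $u,v$ with $u|_E,v|_E\in H^2(E)$ for all $E$: $a_h^{(\epsilon)}(u,v):=(\kappa\nabla_hu,\nabla_hv)_{\mathcal T_h}+a^c_h(u,v)+\epsilon\,a^c_h(v,u)+s^{(\epsilon)}_h(u,v)$, where $a^c_h(u,v):=-\langle\{\kappa\nabla_hu\}^*_{\omega^\tau},[v]\rangle_{\mathcal F_h}$ and $s_h^{(\epsilon)}(u,v):=\langle\varrho_0[u],[v]\rangle_{\mathcal F_h}-\epsilon\langle\varrho_1[\kappa\nabla_hu],[\kappa\nabla_hv]\rangle_{\mathcal F_h^i}$. The UIP-DG problem: find $u_h\in V_h$ with $a_h^{(\epsilon)}(u_h,v_h)=(f,v_h)_{\mathcal T_h}$ for all $v_h\in V_h$. *)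

theory Defs
  imports "HOL-Analysis.Analysis"
begin

definition lipschitz_domain :: "(real^'d) set \<Rightarrow> bool" where
  "lipschitz_domain \<Omega> \<longleftrightarrow> open \<Omega> \<and> bounded \<Omega> \<and> connected \<Omega> \<and> \<Omega> \<noteq> {} \<and>
     (\<forall>p\<in>frontier \<Omega>. \<exists>U \<xi> L (g::real^'d \<Rightarrow> real). open U \<and> p \<in> U \<and> norm \<xi> = 1 \<and>
        (\<forall>y z. \<bar>g y - g z\<bar> \<le> L * norm (y - z)) \<and>
        \<Omega> \<inter> U = {x\<in>U. x \<bullet> \<xi> < g (x - (x \<bullet> \<xi>) *\<^sub>R \<xi>)})"

definition polyhedral_domain :: "(real^'d) set \<Rightarrow> bool" where
  "polyhedral_domain \<Omega> \<longleftrightarrow> (\<exists>P. finite P \<and> (\<forall>S\<in>P. polytope S) \<and> closure \<Omega> = \<Union>P)"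

definition conforming_simplicial_mesh :: "(real^'d) set set \<Rightarrow> (real^'d) set \<Rightarrow> bool" where
  "conforming_simplicial_mesh T \<Omega> \<longleftrightarrow> finite T \<and> T \<noteq> {} \<and>
     (\<forall>E\<in>T. (int CARD('d)) simplex E) \<and>
     (\<forall>E1\<in>T. \<forall>E2\<in>T. E1 \<noteq> E2 \<longrightarrow> (E1 \<inter> E2) face_of E1 \<and> (E1 \<inter> E2) face_of E2) \<and>
     \<Union>T = closure \<Omega>"

definition faces :: "(real^'d) set set \<Rightarrow> (real^'d) set set" where
  "faces T = {F. \<exists>E\<in>T. F facet_of E}"

definition elem_faces :: "(real^'d) set \<Rightarrow> (real^'d) set set" where
  "elem_faces E = {F. F facet_of E}"

definition els :: "(real^'d) set set \<Rightarrow> (real^'d) set \<Rightarrow> (real^'d) set set" where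
  "els T F = {E\<in>T. F facet_of E}"

definition int_face :: "(real^'d) set set \<Rightarrow> (real^'d) set \<Rightarrow> bool" where
  "int_face T F \<longleftrightarrow> F \<in> faces T \<and> (\<exists>E1\<in>T. \<exists>E2\<in>T. E1 \<noteq> E2 \<and> F facet_of E1 \<and> F facet_of E2)"

definition bdry_face :: "(real^'d) set set \<Rightarrow> (real^'d) set \<Rightarrow> bool" where
  "bdry_face T F \<longleftrightarrow> F \<in> faces T \<and> \<not> int_face T F"

definition onormal :: "(real^'d) set \<Rightarrow> (real^'d) set \<Rightarrow> real^'d" where
  "onormal E F = (SOME n. norm n = 1 \<and> (\<forall>x\<in>F. \<forall>y\<in>E. n \<bullet> y \<le> n \<bullet> x))"

definition vol_int :: "(real^'d) set \<Rightarrow> (real^'d \<Rightarrow> real) \<Rightarrow> real" where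
  "vol_int E g = (LINT x:E|lebesgue. g x)"

text \<open>Integral with respect to the (d-1)-dimensional surface measure on a flat face F:
  the integral over the unit-height right prism F + [0,1] n (n a unit normal of F)
  of g composed with the orthogonal projection onto the affine hull of F.\<close>
definition fnormal :: "(real^'d) set \<Rightarrow> real^'d" where
  "fnormal F = (SOME n. norm n = 1 \<and> (\<forall>x\<in>F. \<forall>y\<in>F. n \<bullet> (x - y) = 0))"

definition face_int :: "(real^'d) set \<Rightarrow> (real^'d \<Rightarrow> real) \<Rightarrow> real" where
  "face_int F g =
     (let n = fnormal F; c = (SOME c. c \<in> F) in
      LINT x:{y + t *\<^sub>R n | y t. y \<in> F \<and> t \<in> {0..1}}|lebesgue. g (x - ((x - c) \<bullet> n) *\<^sub>R n))"

definition poly_fun :: "nat \<Rightarrow> (real^'d \<Rightarrow> real) \<Rightarrow> bool" where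
  "poly_fun k p \<longleftrightarrow> (\<exists>c :: ('d \<Rightarrow> nat) \<Rightarrow> real.
      p = (\<lambda>x. \<Sum>\<alpha>\<in>{\<alpha>::'d \<Rightarrow> nat. sum \<alpha> UNIV \<le> k}. c \<alpha> * (\<Prod>i\<in>UNIV. (x $ i) ^ (\<alpha> i))))"

text \<open>Broken polynomials: a family indexed by the elements; v E is the polynomial
  representing v on E (its traces on the faces of E are its values there).\<close>
definition Vh :: "(real^'d) set set \<Rightarrow> nat \<Rightarrow> ((real^'d) set \<Rightarrow> real^'d \<Rightarrow> real) \<Rightarrow> bool" where
  "Vh T k v \<longleftrightarrow> (\<forall>E\<in>T. poly_fun k (v E)) \<and> (\<forall>E. E \<notin> T \<longrightarrow> v E = (\<lambda>_. 0))"

definition Vhat :: "(real^'d) set set \<Rightarrow> nat \<Rightarrow> ((real^'d) set \<Rightarrow> real^'d \<Rightarrow> real) \<Rightarrow> bool" where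
  "Vhat T k w \<longleftrightarrow>
     (\<forall>F\<in>faces T. (\<exists>p. poly_fun k p \<and> (\<forall>x\<in>F. w F x = p x)) \<and> (\<forall>x. x \<notin> F \<longrightarrow> w F x = 0)) \<and>
     (\<forall>F. F \<notin> faces T \<longrightarrow> w F = (\<lambda>_. 0)) \<and>
     (\<forall>F. bdry_face T F \<longrightarrow> w F = (\<lambda>_. 0))"

definition grad :: "(real^'d \<Rightarrow> real) \<Rightarrow> real^'d \<Rightarrow> real^'d" where
  "grad u x = (\<chi> i. frechet_derivative u (at x) (axis i 1))"

definition kEF :: "((real^'d) set \<Rightarrow> real^'d^'d) \<Rightarrow> (real^'d) set \<Rightarrow> (real^'d) set \<Rightarrow> real" where
  "kEF K E F = onormal E F \<bullet> (K E *v onormal E F)"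

definition tau :: "((real^'d) set \<Rightarrow> real^'d^'d) \<Rightarrow> real \<Rightarrow> real \<Rightarrow> (real^'d) set \<Rightarrow> (real^'d) set \<Rightarrow> real" where
  "tau K \<alpha>0 CT E F = \<alpha>0 * CT\<^sup>2 * kEF K E F / diameter E"

definition omg where
  "omg T K \<alpha>0 CT E F =
     (if int_face T F then tau K \<alpha>0 CT E F / (\<Sum>E'\<in>els T F. tau K \<alpha>0 CT E' F) else 1)"

definition rho0 where
  "rho0 T K \<alpha>0 CT F =
     (if int_face T F then (\<Prod>E\<in>els T F. tau K \<alpha>0 CT E F) / (\<Sum>E\<in>els T F. tau K \<alpha>0 CT E F)
      else (\<Sum>E\<in>els T F. tau K \<alpha>0 CT E F))"

definition rho1 where
  "rho1 T K \<alpha>0 CT F = 1 / (\<Sum>E\<in>els T F. tau K \<alpha>0 CT E F)"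

definition jump where
  "jump T v F x = (\<Sum>E\<in>els T F. v E x *\<^sub>R onormal E F)"

definition njump where
  "njump T b F x = (\<Sum>E\<in>els T F. b E x \<bullet> onormal E F)"

definition avg where
  "avg T K \<alpha>0 CT v F x =
     (if int_face T F then (\<Sum>E\<in>els T F. omg T K \<alpha>0 CT E F * v E x)
      else (\<Sum>E\<in>els T F. v E x))"

text \<open>Skew mean {phi}* = omega_2 phi_1 + omega_1 phi_2 (omega_2 = 1 - omega_1), componentwise for vectors.\<close>
definition avgstar_vec where
  "avgstar_vec T K \<alpha>0 CT b F x =
     (if int_face T F then (\<Sum>E\<in>els T F. (1 - omg T K \<alpha>0 CT E F) *\<^sub>R b E x)
      else (\<Sum>E\<in>els T F. b E x))"

definition kgrad :: "((real^'d) set \<Rightarrow> real^'d^'d) \<Rightarrow> ((real^'d) set \<Rightarrow> real^'d \<Rightarrow> real) \<Rightarrow> (real^'d) set \<Rightarrow> real^'d \<Rightarrow> real^'d" where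
  "kgrad K u E x = K E *v grad (u E) x"

definition a_hip where
  "a_hip T K \<alpha>0 CT (\<epsilon>::int) uu vv =
     (let u = fst uu; uh = snd uu; v = fst vv; vh = snd vv in
      (\<Sum>E\<in>T. vol_int E (\<lambda>x. kgrad K u E x \<bullet> grad (v E) x))
      + (\<Sum>E\<in>T. \<Sum>F\<in>elem_faces E. face_int F (\<lambda>x.
            (- kgrad K u E x + tau K \<alpha>0 CT E F *\<^sub>R ((u E x - uh F x) *\<^sub>R onormal E F))
            \<bullet> ((v E x - vh F x) *\<^sub>R onormal E F)))
      + of_int \<epsilon> * (\<Sum>E\<in>T. \<Sum>F\<in>elem_faces E. face_int F (\<lambda>x.
            (- kgrad K v E x) \<bullet> ((u E x - uh F x) *\<^sub>R onormal E F))))"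

definition rhs where
  "rhs T f v = (\<Sum>E\<in>T. vol_int E (\<lambda>x. f x * v E x))"

definition hip_solution where
  "hip_solution T K \<alpha>0 CT \<epsilon> k f uu \<longleftrightarrow> Vh T k (fst uu) \<and> Vhat T k (snd uu) \<and>
     (\<forall>v vh. Vh T k v \<and> Vhat T k vh \<longrightarrow> a_hip T K \<alpha>0 CT \<epsilon> uu (v, vh) = rhs T f v)"

definition a_c where
  "a_c T K \<alpha>0 CT u v =
     - (\<Sum>F\<in>faces T. face_int F (\<lambda>x. avgstar_vec T K \<alpha>0 CT (kgrad K u) F x \<bullet> jump T v F x))"

definition s_h where
  "s_h T K \<alpha>0 CT (\<epsilon>::int) u v =
     (\<Sum>F\<in>faces T. face_int F (\<lambda>x. rho0 T K \<alpha>0 CT F * (jump T u F x \<bullet> jump T v F x)))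
     - of_int \<epsilon> * (\<Sum>F\<in>{F\<in>faces T. int_face T F}. face_int F (\<lambda>x.
          rho1 T K \<alpha>0 CT F * njump T (kgrad K u) F x * njump T (kgrad K v) F x))"

definition a_dg where
  "a_dg T K \<alpha>0 CT (\<epsilon>::int) u v =
     (\<Sum>E\<in>T. vol_int E (\<lambda>x. kgrad K u E x \<bullet> grad (v E) x))
     + a_c T K \<alpha>0 CT u v + of_int \<epsilon> * a_c T K \<alpha>0 CT v u + s_h T K \<alpha>0 CT \<epsilon> u v"

definition dg_solution where
  "dg_solution T K \<alpha>0 CT \<epsilon> k f u \<longleftrightarrow> Vh T k u \<and>
     (\<forall>v. Vh T k v \<longrightarrow> a_dg T K \<alpha>0 CT \<epsilon> u v = rhs T f v)"

definition uhat_of where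
  "uhat_of T K \<alpha>0 CT u F x =
     (if int_face T F \<and> x \<in> F
      then avg T K \<alpha>0 CT u F x - rho1 T K \<alpha>0 CT F * njump T (kgrad K u) F x
      else 0)"

end

theory Submission
  imports Defs
begin

definition mnm :: "('d \<Rightarrow> nat) \<Rightarrow> real^'d \<Rightarrow> real" where
  "mnm \<alpha> x = (\<Prod>i\<in>UNIV. (x $ i) ^ (\<alpha> i))"

definition Aset :: "nat \<Rightarrow> ('d::finite \<Rightarrow> nat) set" where
  "Aset k = {\<alpha>. sum \<alpha> UNIV \<le> k}"

lemma finite_Aset: "finite (Aset k :: ('d::finite \<Rightarrow> nat) set)"
proof -
  have "Aset k \<subseteq> PiE (UNIV::'d set) (\<lambda>_. {..k})"
    unfolding Aset_def PiE_UNIV_domain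
  proof (clarsimp)
    fix \<alpha> :: "'d \<Rightarrow> nat" and i assume "sum \<alpha> UNIV \<le> k"
    moreover have "\<alpha> i \<le> sum \<alpha> UNIV" by (rule member_le_sum) auto
    ultimately show "\<alpha> i \<le> k" by simp
  qed
  moreover have "finite (PiE (UNIV::'d set) (\<lambda>_. {..k}))" by (rule finite_PiE) auto
  ultimately show ?thesis using finite_subset by blast
qed

lemma poly_fun_alt: "poly_fun k p \<longleftrightarrow> (\<exists>c. p = (\<lambda>x. \<Sum>\<alpha>\<in>Aset k. c \<alpha> * mnm \<alpha> x))"
  unfolding poly_fun_def Aset_def mnm_def by simp

lemma poly_fun_add: "poly_fun k p \<Longrightarrow> poly_fun k q \<Longrightarrow> poly_fun k (\<lambda>x. p x + q x)"
  unfolding poly_fun_alt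
proof (elim exE)
  fix c d assume "p = (\<lambda>x. \<Sum>\<alpha>\<in>Aset k. c \<alpha> * mnm \<alpha> x)" "q = (\<lambda>x. \<Sum>\<alpha>\<in>Aset k. d \<alpha> * mnm \<alpha> x)"
  then show "\<exists>e. (\<lambda>x. p x + q x) = (\<lambda>x. \<Sum>\<alpha>\<in>Aset k. e \<alpha> * mnm \<alpha> x)"
    by (intro exI[of _ "\<lambda>\<alpha>. c \<alpha> + d \<alpha>"]) (simp add: sum.distrib distrib_right)
qed

lemma poly_fun_scale: "poly_fun k p \<Longrightarrow> poly_fun k (\<lambda>x. a * p x)"
  unfolding poly_fun_alt
proof (elim exE)
  fix c assume "p = (\<lambda>x. \<Sum>\<alpha>\<in>Aset k. c \<alpha> * mnm \<alpha> x)"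
  then show "\<exists>e. (\<lambda>x. a * p x) = (\<lambda>x. \<Sum>\<alpha>\<in>Aset k. e \<alpha> * mnm \<alpha> x)"
    by (intro exI[of _ "\<lambda>\<alpha>. a * c \<alpha>"]) (simp add: sum_distrib_left mult.assoc)
qed

lemma poly_fun_zero: "poly_fun k (\<lambda>x. 0)"
  unfolding poly_fun_alt by (auto intro!: exI[of _ "\<lambda>\<alpha>. 0"])

lemma poly_fun_sum: "finite I \<Longrightarrow> (\<And>i. i \<in> I \<Longrightarrow> poly_fun k (p i)) \<Longrightarrow> poly_fun k (\<lambda>x. \<Sum>i\<in>I. p i x)"
  by (induction I rule: finite_induct) (auto intro: poly_fun_zero poly_fun_add)

lemma poly_fun_mono: "\<beta> \<in> Aset k \<Longrightarrow> poly_fun k (mnm \<beta>)"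
  unfolding poly_fun_alt
proof -
  assume b: "\<beta> \<in> Aset k"
  have "mnm \<beta> = (\<lambda>x. \<Sum>\<alpha>\<in>Aset k. (if \<alpha> = \<beta> then 1 else 0) * mnm \<alpha> x)"
  proof
    fix x
    have "(\<Sum>\<alpha>\<in>Aset k. (if \<alpha> = \<beta> then 1 else 0) * mnm \<alpha> x) = (\<Sum>\<alpha>\<in>Aset k. if \<alpha> = \<beta> then mnm \<alpha> x else 0)"
      by (rule sum.cong) auto
    also have "\<dots> = mnm \<beta> x" using b finite_Aset[of k] by (subst sum.delta) auto
    finally show "mnm \<beta> x = (\<Sum>\<alpha>\<in>Aset k. (if \<alpha> = \<beta> then 1 else 0) * mnm \<alpha> x)" by simp
  qed
  then show "\<exists>c. mnm \<beta> = (\<lambda>x. \<Sum>\<alpha>\<in>Aset k. c \<alpha> * mnm \<alpha> x)"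
    by (intro exI[of _ "\<lambda>\<alpha>. if \<alpha> = \<beta> then (1::real) else 0"])
qed

lemma cont_mono: "continuous_on UNIV (mnm \<alpha>)"
  unfolding mnm_def[abs_def] by (intro continuous_intros)

lemma poly_fun_cont: "poly_fun k p \<Longrightarrow> continuous_on UNIV p"
  unfolding poly_fun_alt by (auto intro!: continuous_intros cont_mono[THEN continuous_on_compose2[of UNIV]])




lemma hd_mnm: "(mnm \<alpha> has_derivative (\<lambda>h. \<Sum>i\<in>UNIV. (of_nat (\<alpha> i) * (h $ i) * (x $ i) ^ (\<alpha> i - 1)) *
      (\<Prod>j\<in>UNIV - {i}. (x $ j) ^ (\<alpha> j)))) (at x)"
  unfolding mnm_def[abs_def]
  by (intro has_derivative_prod has_derivative_power bounded_linear_imp_has_derivative bounded_linear_vec_nth)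

lemma grad_mnm: "grad (mnm \<alpha>) x $ j = real (\<alpha> j) * mnm (\<alpha>(j := \<alpha> j - 1)) x"
proof -
  have "grad (mnm \<alpha>) x $ j = (\<Sum>i\<in>UNIV. (of_nat (\<alpha> i) * (axis j 1 $ i) * (x $ i) ^ (\<alpha> i - 1)) *
      (\<Prod>j\<in>UNIV - {i}. (x $ j) ^ (\<alpha> j)))"
    unfolding grad_def frechet_derivative_at[OF hd_mnm[of \<alpha> x], symmetric] by simp
  also have "\<dots> = (\<Sum>i\<in>UNIV. if i = j then (of_nat (\<alpha> i) * (x $ i) ^ (\<alpha> i - 1)) *
      (\<Prod>j\<in>UNIV - {i}. (x $ j) ^ (\<alpha> j)) else 0)"
    by (rule sum.cong) (auto simp: axis_def)
  also have "\<dots> = (of_nat (\<alpha> j) * (x $ j) ^ (\<alpha> j - 1)) * (\<Prod>i\<in>UNIV - {j}. (x $ i) ^ (\<alpha> i))"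
    by (subst sum.delta) auto
  also have "mnm (\<alpha>(j := \<alpha> j - 1)) x = (x $ j) ^ (\<alpha> j - 1) * (\<Prod>i\<in>UNIV - {j}. (x $ i) ^ (\<alpha> i))"
    unfolding mnm_def by (subst prod.remove[of _ j]) (auto intro!: prod.cong)
  ultimately show ?thesis by simp
qed

lemma hd_poly: "((\<lambda>x. \<Sum>\<alpha>\<in>S. c \<alpha> * mnm \<alpha> x) has_derivative (\<lambda>h. \<Sum>\<alpha>\<in>S. c \<alpha> * frechet_derivative (mnm \<alpha>) (at x) h)) (at x)"
  unfolding frechet_derivative_at[OF hd_mnm, symmetric] by (intro has_derivative_sum has_derivative_mult_right hd_mnm)

lemma grad_poly: "grad (\<lambda>x. \<Sum>\<alpha>\<in>S. c \<alpha> * mnm \<alpha> x) x $ j = (\<Sum>\<alpha>\<in>S. c \<alpha> * grad (mnm \<alpha>) x $ j)"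
  unfolding grad_def frechet_derivative_at[OF hd_poly[where S=S and c=c and x=x], symmetric] by simp

lemma poly_fun_grad:
  fixes p :: "real^'d \<Rightarrow> real" and j :: 'd
  assumes "poly_fun k p" shows "poly_fun k (\<lambda>x. grad p x $ j)"
proof -
  note \<open>poly_fun k p\<close>
  then obtain c where p: "p = (\<lambda>x. \<Sum>\<alpha>\<in>(Aset k :: ('d \<Rightarrow> nat) set). c \<alpha> * mnm \<alpha> x)" unfolding poly_fun_alt by blast
  have "(\<lambda>x. grad p x $ j) = (\<lambda>x. \<Sum>\<alpha>\<in>(Aset k :: ('d \<Rightarrow> nat) set). (c \<alpha> * real (\<alpha> j)) * mnm (\<alpha>(j := \<alpha> j - 1)) x)"
    unfolding p grad_poly grad_mnm by (simp add: mult.assoc)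
  moreover have "poly_fun k (\<lambda>x. \<Sum>\<alpha>\<in>(Aset k :: ('d \<Rightarrow> nat) set). (c \<alpha> * real (\<alpha> j)) * mnm (\<alpha>(j := \<alpha> j - 1)) x)"
  proof (intro poly_fun_sum finite_Aset poly_fun_scale poly_fun_mono)
    fix \<alpha> :: "'d \<Rightarrow> nat" assume a: "\<alpha> \<in> Aset k"
    have "sum (\<alpha>(j := \<alpha> j - 1)) UNIV \<le> sum \<alpha> UNIV" by (rule sum_mono) auto
    then show "\<alpha>(j := \<alpha> j - 1) \<in> Aset k" using a unfolding Aset_def by simp
  qed
  ultimately show ?thesis by simp
qed

lemma grad_zero: "grad (\<lambda>x. 0) x = 0"
proof -
  have "frechet_derivative (\<lambda>x::real^'a. 0::real) (at x) = (\<lambda>h. 0)"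
    using frechet_derivative_at[OF has_derivative_const[of "0::real" "at x"]] by simp
  then show ?thesis unfolding grad_def by (simp add: vec_eq_iff)
qed

lemma grad_cont: "poly_fun k p \<Longrightarrow> continuous_on UNIV (\<lambda>x. grad p x $ j)"
  by (intro poly_fun_cont poly_fun_grad)



lemma DIM_vec: "DIM(real^'d) = CARD('d)" by simp

lemma facet_struct:
  fixes E F :: "(real^'d) set"
  assumes S: "int CARD('d) simplex E" and Ff: "F facet_of E"
  obtains C p where "finite C" "\<not> affine_dependent C" "card C = CARD('d) + 1" "E = convex hull C"
    "p \<in> C" "F = convex hull (C - {p})"
proof -
  from S obtain C where C: "finite C" "\<not> affine_dependent C" "int (card C) = int CARD('d) + 1" "E = convex hull C"
    unfolding simplex by blast
  then obtain u where "u \<in> C" "F = convex hull (C - {u})"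
    using Ff facet_of_convex_hull_affine_independent_alt by blast
  then show ?thesis using C that by auto
qed

lemma const_on_hyperplane_parallel:
  fixes n m :: "real^'d"
  assumes n: "norm n = 1" and x0: "n \<bullet> x0 = c"
    and m: "\<And>x. n \<bullet> x = c \<Longrightarrow> m \<bullet> x = m \<bullet> x0"
  shows "m = (m \<bullet> n) *\<^sub>R n"
proof -
  define w where "w = m - (m \<bullet> n) *\<^sub>R n"
  have nn: "n \<bullet> n = 1" using n by (simp add: dot_square_norm)
  have "n \<bullet> w = 0" unfolding w_def by (simp add: inner_diff_right nn inner_commute)
  then have "n \<bullet> (x0 + w) = c" using x0 by (simp add: inner_add_right)
  then have "m \<bullet> (x0 + w) = m \<bullet> x0" by (rule m)
  then have mw: "m \<bullet> w = 0" by (simp add: inner_add_right)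
  have "w \<bullet> w = m \<bullet> w - (m \<bullet> n) * (n \<bullet> w)" unfolding w_def by (simp add: inner_diff_left)
  also have "\<dots> = 0" using mw \<open>n \<bullet> w = 0\<close> by simp
  finally have "w = 0" by simp
  then show ?thesis unfolding w_def by simp
qed

definition fvalid :: "(real^'d) set \<Rightarrow> (real^'d) set \<Rightarrow> real^'d \<Rightarrow> bool" where
  "fvalid E F n \<longleftrightarrow> norm n = 1 \<and> (\<forall>x\<in>F. \<forall>y\<in>E. n \<bullet> y \<le> n \<bullet> x)"

lemma facet_data:
  fixes E F :: "(real^'d) set"
  assumes S: "int CARD('d) simplex E" and Ff: "F facet_of E"
  obtains C p c where "finite C" "\<not> affine_dependent C" "card C = CARD('d) + 1" "E = convex hull C"
    "p \<in> C" "F = convex hull (C - {p})"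
    "norm (onormal E F) = 1" "\<forall>x\<in>F. onormal E F \<bullet> x = c" "\<forall>y\<in>E. onormal E F \<bullet> y \<le> c"
    "onormal E F \<bullet> p < c"
    "\<forall>m x0. x0 \<in> F \<and> (\<forall>x\<in>F. m \<bullet> x = m \<bullet> x0) \<longrightarrow> m = (m \<bullet> onormal E F) *\<^sub>R onormal E F"
    "F \<noteq> {}" "compact F"
proof -
  obtain C p where C: "finite C" "\<not> affine_dependent C" "card C = CARD('d) + 1" "E = convex hull C"
    "p \<in> C" "F = convex hull (C - {p})" using facet_struct[OF S Ff] by blast
  have ind: "\<not> affine_dependent (C - {p})" using C(2) affine_dependent_subset by blast
  have cardV: "card (C - {p}) = CARD('d)" using C by simp
  have "aff_dim (C - {p}) = int (card (C - {p})) - 1"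
    using affine_independent_iff_card ind by blast
  then have "aff_dim (C - {p}) = DIM(real^'d) - 1" using cardV by simp
  then obtain a b where ab: "a \<noteq> 0" "affine hull (C - {p}) = {x. a \<bullet> x = b}"
    using aff_dim_eq_hyperplane by blast
  have pn: "p \<notin> affine hull (C - {p})" using C(2,5) unfolding affine_dependent_def by blast
  then have "a \<bullet> p \<noteq> b" using ab by auto
  then obtain a' b' where ab': "a' \<noteq> 0" "affine hull (C - {p}) = {x. a' \<bullet> x = b'}" "a' \<bullet> p < b'"
  proof (cases "a \<bullet> p < b")
    case True then show ?thesis using that ab by blast
  next
    case False
    then have "(-a) \<bullet> p < -b" using \<open>a \<bullet> p \<noteq> b\<close> by simp
    moreover have "affine hull (C - {p}) = {x. (-a) \<bullet> x = -b}" using ab by auto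
    moreover have "-a \<noteq> 0" using ab by simp
    ultimately show ?thesis using that by blast
  qed
  define n where "n = a' /\<^sub>R norm a'"
  define c where "c = b' / norm a'"
  have nn: "norm n = 1" unfolding n_def using ab' by simp
  have hyp: "affine hull (C - {p}) = {x. n \<bullet> x = c}"
    unfolding ab' n_def c_def using ab' by (auto simp: field_simps)
  have np: "n \<bullet> p < c" unfolding n_def c_def using ab' by (simp add: field_simps)
  have Fsub: "F \<subseteq> {x. n \<bullet> x = c}" unfolding C(6) hyp[symmetric] by (rule convex_hull_subset_affine_hull)
  have Csub: "C \<subseteq> {x. n \<bullet> x \<le> c}"
  proof
    fix x assume "x \<in> C"
    show "x \<in> {x. n \<bullet> x \<le> c}"
    proof (cases "x = p")
      case True then show ?thesis using np by simp
    next
      case False then have "x \<in> affine hull (C - {p})" using \<open>x \<in> C\<close> by (simp add: hull_inc)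
      then show ?thesis using hyp by simp
    qed
  qed
  have Esub: "E \<subseteq> {x. n \<bullet> x \<le> c}" unfolding C(4)
    by (rule hull_minimal[OF Csub]) (rule convex_halfspace_le)
  have Fne: "F \<noteq> {}" using Ff by (simp add: facet_of_def)
  then obtain x0 where x0: "x0 \<in> F" by blast
  have par: "m = (m \<bullet> n) *\<^sub>R n" if y0: "y0 \<in> F" and mc: "\<And>x. x \<in> F \<Longrightarrow> m \<bullet> x = m \<bullet> y0" for m y0
  proof (rule const_on_hyperplane_parallel[OF nn])
    show "n \<bullet> y0 = c" using Fsub y0 by auto
    fix x assume "n \<bullet> x = c"
    then have "x \<in> affine hull F" using hyp C(6) by (simp add: affine_hull_convex_hull)
    moreover have "affine hull F \<subseteq> {x. m \<bullet> x = m \<bullet> y0}"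
      by (rule hull_minimal) (use mc in \<open>auto simp: affine_hyperplane\<close>)
    ultimately show "m \<bullet> x = m \<bullet> y0" by auto
  qed
  have valid: "fvalid E F n" unfolding fvalid_def using nn Fsub Esub by auto
  then have vo: "fvalid E F (onormal E F)" unfolding onormal_def fvalid_def by (rule someI)
  have pE: "p \<in> E" unfolding C(4) using C(5) by (simp add: hull_inc)
  have on: "onormal E F = n"
  proof -
    let ?m = "onormal E F"
    have FE: "F \<subseteq> E" using Ff by (rule facet_of_imp_subset)
    have mc: "?m \<bullet> x = ?m \<bullet> x0" if "x \<in> F" for x
    proof -
      have "?m \<bullet> x \<le> ?m \<bullet> x0" using vo that x0 FE unfolding fvalid_def by blast
      moreover have "?m \<bullet> x0 \<le> ?m \<bullet> x" using vo that x0 FE unfolding fvalid_def by blast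
      ultimately show ?thesis by simp
    qed
    then have m: "?m = (?m \<bullet> n) *\<^sub>R n" using par x0 by blast
    have "norm ?m = 1" using vo fvalid_def by blast
    moreover have "norm ((?m \<bullet> n) *\<^sub>R n) = \<bar>?m \<bullet> n\<bar>" using nn by simp
    ultimately have "\<bar>?m \<bullet> n\<bar> = 1" using m by simp
    then have "?m \<bullet> n = 1 \<or> ?m \<bullet> n = -1" by auto
    moreover have "?m \<bullet> n \<noteq> -1"
    proof
      assume "?m \<bullet> n = -1"
      then have "?m = - n" using m by simp
      then have "- n \<bullet> p \<le> - n \<bullet> x0" using vo pE x0 unfolding fvalid_def by auto
      then show False using np Fsub x0 by auto
    qed
    ultimately show ?thesis using m by auto
  qed
  have "compact F" unfolding C(6) by (rule finite_imp_compact_convex_hull) (use C in auto)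
  have f1: "\<forall>x\<in>F. n \<bullet> x = c" using Fsub by auto
  have f2: "\<forall>y\<in>E. n \<bullet> y \<le> c" using Esub by auto
  have par': "\<forall>m x0. x0 \<in> F \<and> (\<forall>x\<in>F. m \<bullet> x = m \<bullet> x0) \<longrightarrow> m = (m \<bullet> n) *\<^sub>R n"
    using par by blast
  show ?thesis by (rule that[unfolded on, OF C nn f1 f2 np par' Fne \<open>compact F\<close>])
qed


lemma bary:
  fixes C :: "(real^'d) set"
  assumes C: "finite C" "affine hull C = UNIV" "p \<in> C" "C - {p} \<noteq> {}"
    and nV: "\<forall>v\<in>C-{p}. n \<bullet> v = c" and np: "n \<bullet> p < c" and nq: "n \<bullet> q < c"
    and g: "g = (1 / real (card (C - {p}))) *\<^sub>R (\<Sum>v\<in>C-{p}. v)"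
  shows "\<exists>t>0. t \<le> 1 \<and> (1 - t) *\<^sub>R g + t *\<^sub>R q \<in> convex hull C"
proof -
  have "q \<in> affine hull C" using C by simp
  then obtain l where l: "sum l C = 1" "(\<Sum>v\<in>C. l v *\<^sub>R v) = q"
    unfolding affine_hull_finite[OF C(1)] by blast
  define V where "V = C - {p}"
  define N where "N = real (card V)"
  have fV: "finite V" using C V_def by simp
  have "V \<noteq> {}" using C V_def by simp
  then have Npos: "N > 0" using fV unfolding N_def by (simp add: card_gt_0_iff)
  define M where "M = (\<Sum>v\<in>C. \<bar>l v\<bar>)"
  have M0: "M \<ge> 0" unfolding M_def by (rule sum_nonneg) auto
  have lM: "\<bar>l v\<bar> \<le> M" if "v \<in> C" for v
    unfolding M_def by (rule member_le_sum) (use that C in auto)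
  define t where "t = 1 / (1 + N * M)"
  have NM: "N * M \<ge> 0" using Npos M0 by simp
  have t0: "t > 0" unfolding t_def using NM by simp
  have t1: "t \<le> 1" unfolding t_def using NM by simp
  have tNM: "1 - t = t * N * M" unfolding t_def using NM by (simp add: field_simps)
  have sumC: "(\<Sum>v\<in>C. f v) = f p + (\<Sum>v\<in>V. f v)" for f :: "real^'d \<Rightarrow> 'b::comm_monoid_add"
    unfolding V_def using C by (simp add: sum.remove)
  have "n \<bullet> q = (\<Sum>v\<in>C. l v * (n \<bullet> v))" unfolding l(2)[symmetric] by (simp add: inner_sum_right)
  also have "\<dots> = l p * (n \<bullet> p) + (\<Sum>v\<in>V. l v * c)" unfolding sumC using nV V_def by simp
  also have "(\<Sum>v\<in>V. l v * c) = (1 - l p) * c" using l(1) unfolding sumC by (simp add: sum_distrib_right[symmetric])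
  finally have "c - n \<bullet> q = l p * (c - n \<bullet> p)" by (simp add: algebra_simps)
  then have lp: "l p > 0" using np nq by (smt (verit) mult_nonpos_nonneg)
  define mu where "mu v = (1 - t) * (if v = p then 0 else 1 / N) + t * l v" for v
  have mu0: "\<forall>v\<in>C. 0 \<le> mu v"
  proof
    fix v assume v: "v \<in> C"
    show "0 \<le> mu v"
    proof (cases "v = p")
      case True then show ?thesis unfolding mu_def using t0 lp by simp
    next
      case False
      have "(1 - t) * (1 / N) = t * M" using tNM Npos by (simp add: field_simps)
      moreover have "t * M \<ge> t * (- l v)" using lM[OF v] t0 by (intro mult_left_mono) auto
      ultimately show ?thesis unfolding mu_def using False by (simp add: algebra_simps)
    qed
  qed
  have sb: "(\<Sum>v\<in>V. 1 / N) = 1" unfolding N_def using Npos N_def by simp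
  have mu1: "sum mu C = 1"
    unfolding mu_def sum.distrib sum_distrib_left[symmetric] l(1) using sb unfolding sumC
    by (simp add: V_def)
  have "(\<Sum>v\<in>C. mu v *\<^sub>R v) = (1 - t) *\<^sub>R (\<Sum>v\<in>C. (if v = p then 0 else 1 / N) *\<^sub>R v) + t *\<^sub>R q"
    unfolding mu_def l(2)[symmetric] by (simp add: scaleR_add_left sum.distrib scaleR_sum_right)
  also have "(\<Sum>v\<in>C. (if v = p then 0 else 1 / N) *\<^sub>R v) = g"
    unfolding sumC g V_def[symmetric] N_def[symmetric] by (simp add: scaleR_sum_right V_def)
  finally have "(\<Sum>v\<in>C. mu v *\<^sub>R v) = (1 - t) *\<^sub>R g + t *\<^sub>R q" .
  then have "(1 - t) *\<^sub>R g + t *\<^sub>R q \<in> convex hull C"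
    unfolding convex_hull_finite[OF C(1)] using mu0 mu1 by blast
  then show ?thesis using t0 t1 by blast
qed


lemma inter_is_facet:
  fixes E1 E2 F :: "(real^'d) set"
  assumes S1: "int CARD('d) simplex E1" and S2: "int CARD('d) simplex E2" and ne: "E1 \<noteq> E2"
    and G1: "(E1 \<inter> E2) face_of E1" and G2: "(E1 \<inter> E2) face_of E2"
    and F1: "F facet_of E1" and F2: "F facet_of E2"
  shows "E1 \<inter> E2 = F"
proof -
  let ?G = "E1 \<inter> E2"
  have d1: "aff_dim E1 = int CARD('d)" using S1 by (rule aff_dim_simplex)
  have d2: "aff_dim E2 = int CARD('d)" using S2 by (rule aff_dim_simplex)
  have dF: "aff_dim F = int CARD('d) - 1" using F1 d1 by (simp add: facet_of_def)
  have FG: "F \<subseteq> ?G" using F1 F2 facet_of_imp_subset by blast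
  have "?G \<noteq> E1"
  proof
    assume "?G = E1"
    then have "E1 face_of E2" using G2 by simp
    then have "aff_dim E1 < aff_dim E2" using face_of_aff_dim_lt[OF convex_simplex[OF S2]] ne by blast
    then show False using d1 d2 by simp
  qed
  then have lt: "aff_dim ?G < int CARD('d)" using face_of_aff_dim_lt[OF convex_simplex[OF S1] G1] d1 by simp
  have "F face_of ?G" using face_of_subset[OF facet_of_imp_face_of[OF F1] FG] by blast
  show ?thesis
  proof (rule ccontr)
    assume "?G \<noteq> F"
    then have "aff_dim F < aff_dim ?G"
      using face_of_aff_dim_lt[OF face_of_imp_convex[OF G1] \<open>F face_of ?G\<close>] by simp
    then show False using lt dF by simp
  qed
qed

lemma opp_normals:
  fixes E1 E2 F :: "(real^'d) set"
  assumes S1: "int CARD('d) simplex E1" and S2: "int CARD('d) simplex E2" and ne: "E1 \<noteq> E2"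
    and G1: "(E1 \<inter> E2) face_of E1" and G2: "(E1 \<inter> E2) face_of E2"
    and F1: "F facet_of E1" and F2: "F facet_of E2"
  shows "onormal E2 F = - onormal E1 F"
proof -
  have GF: "E1 \<inter> E2 = F" by (rule inter_is_facet[OF assms])
  obtain C1 p1 c1 where D1: "finite C1" "\<not> affine_dependent C1" "card C1 = CARD('d) + 1" "E1 = convex hull C1"
    "p1 \<in> C1" "F = convex hull (C1 - {p1})"
    "norm (onormal E1 F) = 1" "\<forall>x\<in>F. onormal E1 F \<bullet> x = c1" "\<forall>y\<in>E1. onormal E1 F \<bullet> y \<le> c1"
    "onormal E1 F \<bullet> p1 < c1"
    "\<forall>m x0. x0 \<in> F \<and> (\<forall>x\<in>F. m \<bullet> x = m \<bullet> x0) \<longrightarrow> m = (m \<bullet> onormal E1 F) *\<^sub>R onormal E1 F"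
    "F \<noteq> {}" "compact F"
    by (rule facet_data[OF S1 F1])
  obtain C2 p2 c2 where D2: "finite C2" "\<not> affine_dependent C2" "card C2 = CARD('d) + 1" "E2 = convex hull C2"
    "p2 \<in> C2" "F = convex hull (C2 - {p2})"
    "norm (onormal E2 F) = 1" "\<forall>x\<in>F. onormal E2 F \<bullet> x = c2" "\<forall>y\<in>E2. onormal E2 F \<bullet> y \<le> c2"
    "onormal E2 F \<bullet> p2 < c2"
    by (rule facet_data[OF S2 F2])
  define n where "n = onormal E1 F"
  define m where "m = onormal E2 F"
  obtain x0 where x0: "x0 \<in> F" using D1(12) by blast
  have "m = (m \<bullet> n) *\<^sub>R n" unfolding n_def m_def
  proof (rule D1(11)[rule_format])
    show "x0 \<in> F \<and> (\<forall>x\<in>F. onormal E2 F \<bullet> x = onormal E2 F \<bullet> x0)" using x0 D2(8) by simp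
  qed
  moreover have "norm ((m \<bullet> n) *\<^sub>R n) = \<bar>m \<bullet> n\<bar>" using D1(7) n_def by simp
  ultimately have "\<bar>m \<bullet> n\<bar> = 1" using D2(7) m_def by simp
  then have "m \<bullet> n = 1 \<or> m \<bullet> n = -1" by auto
  moreover have "m \<bullet> n \<noteq> 1"
  proof
    assume "m \<bullet> n = 1"
    then have mn: "m = n" using \<open>m = (m \<bullet> n) *\<^sub>R n\<close> by simp
    have cc: "c2 = c1" using D1(8) D2(8) x0 mn unfolding n_def m_def by metis
    have aff: "affine hull C1 = UNIV"
    proof -
      have "aff_dim C1 = int (card C1) - 1" using D1(1,2) affine_independent_iff_card by blast
      then have "aff_dim C1 = DIM(real^'d)" using D1(3) by simp
      then show ?thesis using aff_dim_eq_full by blast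
    qed
    have Vne: "C1 - {p1} \<noteq> {}" using D1(6,12) by auto
    define g where "g = (1 / real (card (C1 - {p1}))) *\<^sub>R (\<Sum>v\<in>C1-{p1}. v)"
    have nV: "\<forall>v\<in>C1-{p1}. n \<bullet> v = c1" using D1(6,8) n_def by (simp add: hull_inc)
    have p2E: "p2 \<in> E2" using D2(4,5) by (simp add: hull_inc)
    have np2: "n \<bullet> p2 < c1" using D2(10) mn cc m_def by simp
    obtain t where t: "t > 0" "t \<le> 1" "(1 - t) *\<^sub>R g + t *\<^sub>R p2 \<in> convex hull C1"
      using bary[OF D1(1) aff D1(5) Vne nV D1(10)[folded n_def] np2 g_def] by blast
    have gF: "g \<in> F"
    proof -
      have fV: "finite (C1 - {p1})" using D1(1) by simp
      have cpos: "card (C1 - {p1}) > 0" using fV Vne by (simp add: card_gt_0_iff)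
      have "g = (\<Sum>v\<in>C1-{p1}. (1 / real (card (C1 - {p1}))) *\<^sub>R v)" unfolding g_def by (simp add: scaleR_sum_right)
      moreover have "(\<Sum>v\<in>C1-{p1}. (1 / real (card (C1 - {p1})))) = 1" using cpos by simp
      ultimately have "g \<in> convex hull (C1 - {p1})"
        unfolding convex_hull_finite[OF fV] by (intro CollectI exI[of _ "\<lambda>_. 1 / real (card (C1 - {p1}))"]) simp
      then show ?thesis using D1(6) by simp
    qed
    have FE2: "F \<subseteq> E2" using F2 facet_of_imp_subset by blast
    let ?z = "(1 - t) *\<^sub>R g + t *\<^sub>R p2"
    have "?z \<in> E2"
      by (rule convexD[OF convex_simplex[OF S2]]) (use gF FE2 p2E t in auto)
    moreover have "?z \<in> E1" using t(3) D1(4) by simp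
    ultimately have "?z \<in> F" using GF by blast
    then have "n \<bullet> ?z = c1" using D1(8) n_def by simp
    moreover have "n \<bullet> g = c1" using gF D1(8) n_def by simp
    ultimately have "(1 - t) * c1 + t * (n \<bullet> p2) = c1" by (simp add: inner_add_right)
    then have "t * (n \<bullet> p2 - c1) = 0" by (simp add: algebra_simps)
    then show False using t np2 by simp
  qed
  ultimately have "m \<bullet> n = -1" by simp
  then show ?thesis using \<open>m = (m \<bullet> n) *\<^sub>R n\<close> m_def n_def by simp
qed



definition fok :: "(real^'d) set \<Rightarrow> bool" where
  "fok F \<longleftrightarrow> F \<noteq> {} \<and> compact F \<and> (\<exists>n. norm n = 1 \<and> (\<forall>x\<in>F. \<forall>y\<in>F. n \<bullet> (x - y) = 0))"

definition gd :: "(real^'d) set \<Rightarrow> (real^'d \<Rightarrow> real) \<Rightarrow> bool" where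
  "gd F g \<longleftrightarrow> (\<exists>h. continuous_on UNIV h \<and> (\<forall>x\<in>F. g x = h x))"

definition prism :: "(real^'d) set \<Rightarrow> (real^'d) set" where
  "prism F = {y + t *\<^sub>R fnormal F | y t. y \<in> F \<and> t \<in> {0..1}}"

definition proj :: "(real^'d) set \<Rightarrow> real^'d \<Rightarrow> real^'d" where
  "proj F x = x - ((x - (SOME c. c \<in> F)) \<bullet> fnormal F) *\<^sub>R fnormal F"

lemma face_int_alt: "face_int F g = (LINT x:prism F|lebesgue. g (proj F x))"
  unfolding face_int_def prism_def proj_def Let_def by simp

lemma fok_fnormal:
  assumes "fok F"
  shows "norm (fnormal F) = 1" "\<forall>x\<in>F. \<forall>y\<in>F. fnormal F \<bullet> (x - y) = 0"
proof -
  have "\<exists>n. norm n = 1 \<and> (\<forall>x\<in>F. \<forall>y\<in>F. n \<bullet> (x - y) = 0)" using assms fok_def by blast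
  then have "norm (fnormal F) = 1 \<and> (\<forall>x\<in>F. \<forall>y\<in>F. fnormal F \<bullet> (x - y) = 0)"
    unfolding fnormal_def by (rule someI_ex)
  then show "norm (fnormal F) = 1" "\<forall>x\<in>F. \<forall>y\<in>F. fnormal F \<bullet> (x - y) = 0" by auto
qed

lemma proj_prism:
  assumes "fok F" "x \<in> prism F"
  shows "proj F x \<in> F"
proof -
  let ?n = "fnormal F" and ?c = "SOME c. c \<in> F"
  have cF: "?c \<in> F" using assms(1) unfolding fok_def by (simp add: some_in_eq)
  obtain y t where x: "x = y + t *\<^sub>R ?n" "y \<in> F" using assms(2) unfolding prism_def by blast
  have nn: "?n \<bullet> ?n = 1" using fok_fnormal(1)[OF assms(1)] by (simp add: dot_square_norm)
  have "(y - ?c) \<bullet> ?n = 0" using fok_fnormal(2)[OF assms(1)] x(2) cF by (simp add: inner_commute)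
  then have "(x - ?c) \<bullet> ?n = t" unfolding x(1) using nn
    by (simp add: inner_add_left inner_diff_left algebra_simps)
  then have "proj F x = y" unfolding proj_def x(1) by simp
  then show ?thesis using x by simp
qed

lemma compact_prism:
  assumes "fok F" shows "compact (prism F)"
proof -
  have "prism F = (\<lambda>p. fst p + snd p *\<^sub>R fnormal F) ` (F \<times> {0..1})"
  proof
    show "prism F \<subseteq> (\<lambda>p. fst p + snd p *\<^sub>R fnormal F) ` (F \<times> {0..1})" unfolding prism_def by force
    show "(\<lambda>p. fst p + snd p *\<^sub>R fnormal F) ` (F \<times> {0..1}) \<subseteq> prism F" unfolding prism_def by force
  qed
  moreover have "compact (F \<times> {0..(1::real)})" using assms fok_def compact_Times by blast
  moreover have "continuous_on (F \<times> {0..(1::real)}) (\<lambda>p. fst p + snd p *\<^sub>R fnormal F)"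
    by (intro continuous_intros)
  ultimately show ?thesis using compact_continuous_image[of "F \<times> {0..(1::real)}" "\<lambda>p. fst p + snd p *\<^sub>R fnormal F"] by simp
qed

lemma face_int_cong:
  assumes "fok F" "\<And>x. x \<in> F \<Longrightarrow> g x = h x"
  shows "face_int F g = face_int F h"
  unfolding face_int_alt
proof (rule set_lebesgue_integral_cong)
  show "prism F \<in> sets lebesgue"
    using compact_prism[OF assms(1)] by (simp add: borel_compact)
  show "\<forall>x. x \<in> prism F \<longrightarrow> g (proj F x) = h (proj F x)"
    using proj_prism[OF assms(1)] assms(2) by blast
qed

lemma cont_proj: "continuous_on UNIV (proj F)"
  unfolding proj_def by (intro continuous_intros)

lemma integrable_cont:
  fixes h :: "real^'d \<Rightarrow> real"
  assumes "fok F" "continuous_on UNIV h"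
  shows "set_integrable lebesgue (prism F) (\<lambda>x. h (proj F x))"
proof -
  have hc: "continuous_on UNIV (\<lambda>x. h (proj F x))"
    using continuous_on_compose2[OF assms(2) cont_proj] by simp
  have cp: "compact (prism F)" by (rule compact_prism[OF assms(1)])
  have "integrable lborel (\<lambda>x. indicator (prism F) x *\<^sub>R h (proj F x))"
    by (rule borel_integrable_compact[OF cp]) (use hc continuous_on_subset in blast)
  moreover have "(\<lambda>x. indicator (prism F) x *\<^sub>R h (proj F x)) \<in> borel_measurable lborel"
  proof (rule borel_measurable_scaleR)
    show "indicat_real (prism F) \<in> borel_measurable lborel"
      by (rule borel_measurable_indicator) (simp add: borel_compact cp)
    show "(\<lambda>x. h (proj F x)) \<in> borel_measurable lborel"
      using hc by (simp add: borel_measurable_continuous_onI)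
  qed
  ultimately show ?thesis
    unfolding set_integrable_def using integrable_completion by blast
qed

lemma face_int_add:
  assumes "fok F" "gd F g1" "gd F g2"
  shows "face_int F (\<lambda>x. g1 x + g2 x) = face_int F g1 + face_int F g2"
proof -
  obtain h1 where h1: "continuous_on UNIV h1" "\<forall>x\<in>F. g1 x = h1 x" using assms gd_def by blast
  obtain h2 where h2: "continuous_on UNIV h2" "\<forall>x\<in>F. g2 x = h2 x" using assms gd_def by blast
  have "face_int F (\<lambda>x. g1 x + g2 x) = face_int F (\<lambda>x. h1 x + h2 x)"
    by (rule face_int_cong[OF assms(1)]) (use h1 h2 in auto)
  also have "\<dots> = face_int F h1 + face_int F h2"
    unfolding face_int_alt using integrable_cont[OF assms(1) h1(1)] integrable_cont[OF assms(1) h2(1)]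
    by simp
  also have "\<dots> = face_int F g1 + face_int F g2"
  proof -
    have "face_int F h1 = face_int F g1" by (rule face_int_cong[OF assms(1)]) (use h1 in auto)
    moreover have "face_int F h2 = face_int F g2" by (rule face_int_cong[OF assms(1)]) (use h2 in auto)
    ultimately show ?thesis by simp
  qed
  finally show ?thesis .
qed

lemma face_int_cmult: "face_int F (\<lambda>x. a * g x) = a * face_int F g"
  unfolding face_int_alt by simp

lemma face_int_zero: "face_int F (\<lambda>x. 0) = 0"
  unfolding face_int_alt by simp

lemma gd_cont: "continuous_on UNIV h \<Longrightarrow> gd F h"
  unfolding gd_def by blast

lemma gd_add: "gd F g1 \<Longrightarrow> gd F g2 \<Longrightarrow> gd F (\<lambda>x. g1 x + g2 x)"
proof -
  assume "gd F g1" "gd F g2"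
  then obtain h1 h2 where "continuous_on UNIV h1" "\<forall>x\<in>F. g1 x = h1 x" "continuous_on UNIV h2" "\<forall>x\<in>F. g2 x = h2 x"
    unfolding gd_def by blast
  then show ?thesis unfolding gd_def by (intro exI[of _ "\<lambda>x. h1 x + h2 x"]) (auto intro!: continuous_intros)
qed

lemma gd_mult: "gd F g1 \<Longrightarrow> gd F g2 \<Longrightarrow> gd F (\<lambda>x. g1 x * g2 x)"
proof -
  assume "gd F g1" "gd F g2"
  then obtain h1 h2 where "continuous_on UNIV h1" "\<forall>x\<in>F. g1 x = h1 x" "continuous_on UNIV h2" "\<forall>x\<in>F. g2 x = h2 x"
    unfolding gd_def by blast
  then show ?thesis unfolding gd_def by (intro exI[of _ "\<lambda>x. h1 x * h2 x"]) (auto intro!: continuous_intros)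
qed

lemma gd_const: "gd F (\<lambda>x. a)"
  unfolding gd_def by (intro exI[of _ "\<lambda>x. a"]) (auto intro!: continuous_intros)

lemma gd_scale: "gd F g \<Longrightarrow> gd F (\<lambda>x. a * g x)"
  using gd_mult[OF gd_const] by blast

lemma gd_minus: "gd F g \<Longrightarrow> gd F (\<lambda>x. - g x)"
  using gd_scale[of F g "-1"] by simp

lemma gd_diff: "gd F g1 \<Longrightarrow> gd F g2 \<Longrightarrow> gd F (\<lambda>x. g1 x - g2 x)"
  using gd_add[OF _ gd_minus] by simp

lemma gd_sum: "finite I \<Longrightarrow> (\<And>i. i \<in> I \<Longrightarrow> gd F (g i)) \<Longrightarrow> gd F (\<lambda>x. \<Sum>i\<in>I. g i x)"
  by (induction I rule: finite_induct) (auto intro: gd_add gd_const)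

lemma face_int_sum:
  assumes "fok F" "finite I" "\<And>i. i \<in> I \<Longrightarrow> gd F (g i)"
  shows "face_int F (\<lambda>x. \<Sum>i\<in>I. g i x) = (\<Sum>i\<in>I. face_int F (g i))"
  using assms(2,3)
proof (induction I rule: finite_induct)
  case empty then show ?case by (simp add: face_int_zero)
next
  case (insert i I)
  have "face_int F (\<lambda>x. \<Sum>i\<in>insert i I. g i x) = face_int F (\<lambda>x. g i x + (\<Sum>i\<in>I. g i x))"
    using insert by simp
  also have "\<dots> = face_int F (g i) + face_int F (\<lambda>x. \<Sum>i\<in>I. g i x)"
  proof (rule face_int_add[OF assms(1)])
    show "gd F (g i)" using insert by simp
    show "gd F (\<lambda>x. \<Sum>i\<in>I. g i x)" by (rule gd_sum) (use insert in auto)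
  qed
  finally show ?case using insert by simp
qed

lemma face_int_diff:
  assumes "fok F" "gd F g1" "gd F g2"
  shows "face_int F (\<lambda>x. g1 x - g2 x) = face_int F g1 - face_int F g2"
proof -
  have "face_int F (\<lambda>x. g1 x - g2 x) = face_int F (\<lambda>x. g1 x + (-1) * g2 x)" by simp
  also have "\<dots> = face_int F g1 + face_int F (\<lambda>x. (-1) * g2 x)"
    by (rule face_int_add[OF assms(1,2) gd_scale[OF assms(3)]])
  also have "face_int F (\<lambda>x. (-1) * g2 x) = - face_int F g2" using face_int_cmult[of F "-1" g2] by simp
  finally show ?thesis by simp
qed



lemma mesh_simplex: "conforming_simplicial_mesh T \<Omega> \<Longrightarrow> E \<in> T \<Longrightarrow> int CARD('d) simplex (E :: (real^'d) set)"
  unfolding conforming_simplicial_mesh_def by auto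

lemma mesh_fin: "conforming_simplicial_mesh T \<Omega> \<Longrightarrow> finite T"
  unfolding conforming_simplicial_mesh_def by blast

lemma facet_basic:
  fixes E F :: "(real^'d) set"
  assumes S: "int CARD('d) simplex E" and Ff: "F facet_of E"
  shows "norm (onormal E F) = 1" "\<exists>c. \<forall>x\<in>F. onormal E F \<bullet> x = c" "F \<noteq> {}" "compact F"
proof -
  obtain C p c where D: "finite C" "\<not> affine_dependent C" "card C = CARD('d) + 1" "E = convex hull C"
    "p \<in> C" "F = convex hull (C - {p})"
    "norm (onormal E F) = 1" "\<forall>x\<in>F. onormal E F \<bullet> x = c" "\<forall>y\<in>E. onormal E F \<bullet> y \<le> c"
    "onormal E F \<bullet> p < c"
    "\<forall>m x0. x0 \<in> F \<and> (\<forall>x\<in>F. m \<bullet> x = m \<bullet> x0) \<longrightarrow> m = (m \<bullet> onormal E F) *\<^sub>R onormal E F"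
    "F \<noteq> {}" "compact F"
    by (rule facet_data[OF S Ff])
  show "norm (onormal E F) = 1" "\<exists>c. \<forall>x\<in>F. onormal E F \<bullet> x = c" "F \<noteq> {}" "compact F"
    using D by auto
qed

lemma facet_fok:
  fixes E F :: "(real^'d) set"
  assumes S: "int CARD('d) simplex E" and Ff: "F facet_of E"
  shows "fok F"
proof -
  obtain c where D: "norm (onormal E F) = 1" "\<forall>x\<in>F. onormal E F \<bullet> x = c" "F \<noteq> {}" "compact F"
    using facet_basic[OF S Ff] by blast
  have "\<forall>x\<in>F. \<forall>y\<in>F. onormal E F \<bullet> (x - y) = 0" using D(2) by (simp add: inner_diff_right)
  then show ?thesis unfolding fok_def using D by blast
qed

lemma faces_fok: "conforming_simplicial_mesh T \<Omega> \<Longrightarrow> F \<in> faces T \<Longrightarrow> fok F"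
proof -
  assume m: "conforming_simplicial_mesh T \<Omega>" and F: "F \<in> faces T"
  then obtain E where E: "E \<in> T" "F facet_of E" unfolding faces_def by blast
  show "fok F" by (rule facet_fok[OF mesh_simplex[OF m E(1)] E(2)])
qed

lemma finite_elem_faces: "int CARD('d) simplex (E :: (real^'d) set) \<Longrightarrow> finite (elem_faces E)"
proof -
  assume "int CARD('d) simplex E"
  then have "finite {F. F face_of E}" by (intro finite_polytope_faces simplex_imp_polytope)
  then show ?thesis unfolding elem_faces_def by (rule finite_subset[rotated]) (auto simp: facet_of_def)
qed

lemma finite_faces: "conforming_simplicial_mesh T \<Omega> \<Longrightarrow> finite (faces (T :: (real^'d) set set))"
proof -
  assume m: "conforming_simplicial_mesh T \<Omega>"
  have "faces T = (\<Union>E\<in>T. elem_faces E)" unfolding faces_def elem_faces_def by auto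
  moreover have "finite (\<Union>E\<in>T. elem_faces E)"
    by (rule finite_UN_I[OF mesh_fin[OF m]]) (rule finite_elem_faces[OF mesh_simplex[OF m]])
  ultimately show ?thesis by simp
qed

lemma reindex:
  assumes m: "conforming_simplicial_mesh T \<Omega>"
  shows "(\<Sum>E\<in>T. \<Sum>F\<in>elem_faces E. G E F) = (\<Sum>F\<in>faces (T :: (real^'d) set set). \<Sum>E\<in>els T F. G E F)"
proof -
  have "(\<Sum>E\<in>T. \<Sum>F\<in>elem_faces E. G E F) = (\<Sum>E\<in>T. \<Sum>F\<in>{F\<in>faces T. F facet_of E}. G E F)"
  proof (rule sum.cong[OF refl])
    fix E assume "E \<in> T"
    then have "elem_faces E = {F\<in>faces T. F facet_of E}" unfolding elem_faces_def faces_def by blast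
    then show "(\<Sum>F\<in>elem_faces E. G E F) = (\<Sum>F\<in>{F\<in>faces T. F facet_of E}. G E F)" by simp
  qed
  also have "\<dots> = (\<Sum>F\<in>faces T. \<Sum>E\<in>{E\<in>T. F facet_of E}. G E F)"
    by (rule sum.swap_restrict[OF mesh_fin[OF m] finite_faces[OF m]])
  finally show ?thesis unfolding els_def .
qed

lemma els_int:
  assumes m: "conforming_simplicial_mesh T \<Omega>" and i: "int_face T F"
  obtains E1 E2 where "E1 \<noteq> E2" "els T F = {E1, E2}" "E1 \<in> T" "E2 \<in> T" "F facet_of E1" "F facet_of E2"
    "onormal E2 F = - onormal (E1 :: (real^'d) set) F"
proof -
  from i obtain E1 E2 where E: "E1 \<in> T" "E2 \<in> T" "E1 \<noteq> E2" "F facet_of E1" "F facet_of E2"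
    unfolding int_face_def by blast
  have opp: "onormal B F = - onormal A F" if "A \<in> T" "B \<in> T" "A \<noteq> B" "F facet_of A" "F facet_of B" for A B
  proof (rule opp_normals)
    show "int CARD('d) simplex A" "int CARD('d) simplex B" using mesh_simplex[OF m] that by auto
    show "(A \<inter> B) face_of A" "(A \<inter> B) face_of B" using m that unfolding conforming_simplicial_mesh_def by blast+
    show "A \<noteq> B" "F facet_of A" "F facet_of B" using that by auto
  qed
  have "els T F = {E1, E2}"
  proof
    show "{E1, E2} \<subseteq> els T F" using E unfolding els_def by auto
    show "els T F \<subseteq> {E1, E2}"
    proof
      fix E3 assume "E3 \<in> els T F"
      then have E3: "E3 \<in> T" "F facet_of E3" unfolding els_def by auto
      show "E3 \<in> {E1, E2}"
      proof (rule ccontr)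
        assume "E3 \<notin> {E1, E2}"
        then have ne: "E3 \<noteq> E1" "E3 \<noteq> E2" by auto
        have "onormal E3 F = - onormal E1 F" by (rule opp[OF E(1) E3(1) ne(1)[symmetric] E(4) E3(2)])
        moreover have "onormal E3 F = - onormal E2 F" by (rule opp[OF E(2) E3(1) ne(2)[symmetric] E(5) E3(2)])
        moreover have "onormal E2 F = - onormal E1 F" by (rule opp[OF E(1,2,3,4,5)])
        ultimately have "onormal E1 F = - onormal E1 F" by simp
        then have "onormal E1 F = 0" by (simp add: vec_eq_iff)
        moreover have "norm (onormal E1 F) = 1"
          by (rule facet_basic(1)[OF mesh_simplex[OF m E(1)] E(4)])
        ultimately show False by simp
      qed
    qed
  qed
  then show ?thesis by (rule that[OF E(3) _ E(1,2,4,5) opp[OF E(1,2,3,4,5)]])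
qed

lemma els_bdry:
  assumes m: "conforming_simplicial_mesh T \<Omega>" and F: "F \<in> faces T" and b: "\<not> int_face T F"
  obtains E where "els T F = {E}" "E \<in> T" "F facet_of (E :: (real^'d) set)"
proof -
  from F obtain E where E: "E \<in> T" "F facet_of E" unfolding faces_def by blast
  have "els T F = {E}"
  proof
    show "{E} \<subseteq> els T F" using E unfolding els_def by auto
    show "els T F \<subseteq> {E}" using b E F unfolding els_def int_face_def by blast
  qed
  then show ?thesis using that E by blast
qed


lemma K_pos:
  fixes T :: "(real^'d) set set"
  assumes lip: "lipschitz_domain \<Omega>" and m: "conforming_simplicial_mesh T \<Omega>"
    and pc: "\<forall>E\<in>T. \<forall>x\<in>interior E. \<kappa> x = K E"
    and kp: "AE x in lebesgue. x \<in> \<Omega> \<longrightarrow>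
          transpose (\<kappa> x) = \<kappa> x \<and>
          (\<forall>\<xi>. \<kappa>min * (\<xi> \<bullet> \<xi>) \<le> \<xi> \<bullet> (\<kappa> x *v \<xi>) \<and> \<xi> \<bullet> (\<kappa> x *v \<xi>) \<le> \<kappa>max * (\<xi> \<bullet> \<xi>))"
    and E: "E \<in> T"
  shows "\<kappa>min * (\<xi> \<bullet> \<xi>) \<le> \<xi> \<bullet> (K E *v \<xi>)"
proof -
  let ?P = "\<lambda>x. transpose (\<kappa> x) = \<kappa> x \<and>
          (\<forall>\<xi>. \<kappa>min * (\<xi> \<bullet> \<xi>) \<le> \<xi> \<bullet> (\<kappa> x *v \<xi>) \<and> \<xi> \<bullet> (\<kappa> x *v \<xi>) \<le> \<kappa>max * (\<xi> \<bullet> \<xi>))"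
  have S: "int CARD('d) simplex E" by (rule mesh_simplex[OF m E])
  have cE: "convex E" by (rule convex_simplex[OF S])
  have "aff_dim E = DIM(real^'d)" using aff_dim_simplex[OF S] by simp
  then have aE: "affine hull E = UNIV" using aff_dim_eq_full by blast
  have "E \<noteq> {}" using aE by auto
  then have "rel_interior E \<noteq> {}" using rel_interior_eq_empty[OF cE] by simp
  then have iE: "interior E \<noteq> {}" using rel_interior_interior[OF aE] by simp
  have "\<Union>T = closure \<Omega>" using m by (simp add: conforming_simplicial_mesh_def)
  then have "E \<subseteq> closure \<Omega>" using E by blast
  then have "interior E \<inter> closure \<Omega> \<noteq> {}" using iE interior_subset by blast
  then have U: "interior E \<inter> \<Omega> \<noteq> {}" using open_Int_closure_eq_empty[of "interior E" \<Omega>] by simp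
  have oO: "open \<Omega>" using lip unfolding lipschitz_domain_def by blast
  have oU: "open (interior E \<inter> \<Omega>)" using oO by blast
  obtain N where N: "{x \<in> space lebesgue. \<not> (x \<in> \<Omega> \<longrightarrow> ?P x)} \<subseteq> N" "emeasure lebesgue N = 0" "N \<in> sets lebesgue"
    using kp by (rule AE_E)
  have "\<exists>x\<in>interior E \<inter> \<Omega>. ?P x"
  proof (rule ccontr)
    assume "\<not> ?thesis"
    then have "interior E \<inter> \<Omega> \<subseteq> N" using N(1) by auto
    moreover have "N \<in> null_sets lebesgue" using N(2,3) by (simp add: null_sets_def)
    moreover have "interior E \<inter> \<Omega> \<in> sets lebesgue" using oU by simp
    ultimately have "interior E \<inter> \<Omega> \<in> null_sets lebesgue" using null_sets_subset by blast
    then have "negligible (interior E \<inter> \<Omega>)" using negligible_iff_null_sets by blast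
    then show False using open_not_negligible[OF oU U] by simp
  qed
  then obtain x where x: "x \<in> interior E" "?P x" by blast
  have "\<kappa> x = K E" using pc E x(1) by blast
  then show ?thesis using x(2) by metis
qed

lemma diam_pos:
  assumes S: "int CARD('d) simplex (E :: (real^'d) set)"
  shows "diameter E > 0"
proof -
  obtain C where C: "finite C" "int (card C) = int CARD('d) + 1" "E = convex hull C"
    using S unfolding simplex by blast
  have "CARD('d) > 0" by (rule zero_less_card_finite)
  then have "card C \<ge> 2" using C(2) by linarith
  then obtain a b where ab: "a \<in> C" "b \<in> C" "a \<noteq> b"
    by (metis One_nat_def card_le_Suc0_iff_eq not_less_eq_eq numeral_2_eq_2 C(1))
  have "a \<in> E" "b \<in> E" using ab C(3) by (auto simp: hull_inc)
  moreover have "bounded E" using compact_simplex[OF S] compact_imp_bounded by blast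
  ultimately have "dist a b \<le> diameter E" using diameter_bounded_bound by blast
  moreover have "dist a b > 0" using ab by simp
  ultimately show ?thesis by linarith
qed

lemma tau_pos:
  fixes T :: "(real^'d) set set"
  assumes m: "conforming_simplicial_mesh T \<Omega>" and E: "E \<in> T" and F: "F facet_of E"
    and Kp: "\<forall>\<xi>. \<kappa>min * (\<xi> \<bullet> \<xi>) \<le> \<xi> \<bullet> (K E *v \<xi>)" and km: "\<kappa>min > 0"
    and a0: "\<alpha>0 > 0" and CT: "CT > 0"
  shows "tau K \<alpha>0 CT E F > 0"
proof -
  have S: "int CARD('d) simplex E" by (rule mesh_simplex[OF m E])
  have n1: "norm (onormal E F) = 1" by (rule facet_basic(1)[OF S F])
  then have "onormal E F \<bullet> onormal E F = 1" by (simp add: dot_square_norm)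
  then have "kEF K E F \<ge> \<kappa>min" using Kp unfolding kEF_def by (metis mult.right_neutral)
  then have "kEF K E F > 0" using km by simp
  then show ?thesis unfolding tau_def using diam_pos[OF S] a0 CT by simp
qed



definition HX where
  "HX T K a0 CT (e::int) u uh v vh F x =
     (\<Sum>E\<in>els T F. (- kgrad K u E x + tau K a0 CT E F *\<^sub>R ((u E x - uh F x) *\<^sub>R onormal E F))
            \<bullet> ((v E x - vh F x) *\<^sub>R onormal E F))
     + of_int e * (\<Sum>E\<in>els T F. (- kgrad K v E x) \<bullet> ((u E x - uh F x) *\<^sub>R onormal E F))"

definition DX where
  "DX T K a0 CT (e::int) u v F x =
     - (avgstar_vec T K a0 CT (kgrad K u) F x \<bullet> jump T v F x)
     + of_int e * (- (avgstar_vec T K a0 CT (kgrad K v) F x \<bullet> jump T u F x))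
     + rho0 T K a0 CT F * (jump T u F x \<bullet> jump T v F x)
     - of_int e * (if int_face T F then rho1 T K a0 CT F * njump T (kgrad K u) F x * njump T (kgrad K v) F x else 0)"

definition Qt where
  "Qt T K a0 CT (e::int) v F x =
     (\<Sum>E\<in>els T F. - tau K a0 CT E F * v E x + of_int e * (kgrad K v E x \<bullet> onormal E F))"

lemma pw_int:
  assumes els: "els T F = {E1, E2}" and ne: "E1 \<noteq> E2" and opp: "onormal E2 F = - onormal E1 F"
    and n1: "norm (onormal E1 F) = 1" and i: "int_face T F" and x: "x \<in> F"
    and S: "tau K a0 CT E1 F + tau K a0 CT E2 F \<noteq> 0"
  shows "HX T K a0 CT e u uh v vh F x = DX T K a0 CT e u v F x
     + (uh F x - uhat_of T K a0 CT u F x) * Qt T K a0 CT e v F x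
     - vh F x * (\<Sum>E\<in>els T F. tau K a0 CT E F) * (uhat_of T K a0 CT u F x - uh F x)"
proof -
  define n where "n = onormal E1 F"
  define t1 where "t1 = tau K a0 CT E1 F"
  define t2 where "t2 = tau K a0 CT E2 F"
  define p where "p = inverse (t1 + t2)"
  have nn: "n \<bullet> n = 1" using n1 unfolding n_def by (simp add: dot_square_norm)
  have pS: "p * (t1 + t2) = 1" unfolding p_def using S t1_def t2_def by simp
  show ?thesis
    unfolding HX_def DX_def Qt_def uhat_of_def avg_def avgstar_vec_def jump_def njump_def rho0_def rho1_def omg_def
    apply (simp add: i x ne els opp flip: n_def t1_def t2_def)
    apply (simp only: inner_add_left inner_add_right inner_diff_left inner_diff_right inner_scaleR_left inner_scaleR_right inner_minus_left inner_minus_right nn divide_inverse flip: p_def)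
    using pS apply algebra
    done
qed


lemma pw_bdry:
  assumes els: "els T F = {E}" and b: "\<not> int_face T F"
    and n1: "norm (onormal E F) = 1" and z1: "uh F x = 0" and z2: "vh F x = 0"
  shows "HX T K a0 CT e u uh v vh F x = DX T K a0 CT e u v F x"
proof -
  define n where "n = onormal E F"
  have nn: "n \<bullet> n = 1" using n1 unfolding n_def by (simp add: dot_square_norm)
  show ?thesis
    unfolding HX_def DX_def avgstar_vec_def jump_def njump_def rho0_def
    apply (simp add: b els z1 z2 flip: n_def)
    apply (simp only: inner_add_left inner_add_right inner_diff_left inner_diff_right inner_scaleR_left inner_scaleR_right inner_minus_left inner_minus_right nn)
    apply (simp add: algebra_simps)
    done
qed

lemma Vh_poly: "Vh T k u \<Longrightarrow> poly_fun k (u E)"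
  unfolding Vh_def by (cases "E \<in> T") (auto intro: poly_fun_zero)

lemma grad_cont_vec: "poly_fun k p \<Longrightarrow> continuous_on UNIV (grad p)"
proof -
  assume p: "poly_fun k p"
  have "continuous_on UNIV (\<lambda>x. \<chi> i. frechet_derivative p (at x) (axis i 1))"
  proof (rule continuous_on_vec_lambda)
    fix i
    have "continuous_on UNIV (\<lambda>x. grad p x $ i)" by (rule grad_cont[OF p])
    then show "continuous_on UNIV (\<lambda>x. frechet_derivative p (at x) (axis i 1))" by (simp add: grad_def)
  qed
  then show ?thesis unfolding grad_def[abs_def] .
qed

lemma kgrad_cont: "poly_fun k (u E) \<Longrightarrow> continuous_on UNIV (kgrad K u E)"
  unfolding kgrad_def[abs_def]
  using continuous_on_compose2[OF matrix_vector_mult_linear_continuous_on[of UNIV "K E"] grad_cont_vec] by auto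

lemma poly_kgrad: "poly_fun k p \<Longrightarrow> poly_fun k (\<lambda>y. (M *v grad p y) \<bullet> (n :: real^'d))"
proof -
  assume p: "poly_fun k p"
  have eq: "(\<lambda>y. (M *v grad p y) \<bullet> n) = (\<lambda>y. \<Sum>i\<in>UNIV. \<Sum>j\<in>UNIV. (n $ i * M $ i $ j) * grad p y $ j)"
    by (simp add: inner_vec_def matrix_vector_mult_def sum_distrib_left sum_distrib_right mult_ac)
  show ?thesis unfolding eq
    by (intro poly_fun_sum poly_fun_scale poly_fun_grad p) auto
qed

lemma kgrad_zero: "kgrad K (\<lambda>E x. 0) E x = 0"
  unfolding kgrad_def grad_zero by simp

lemma gd_A:
  assumes "continuous_on UNIV G" "continuous_on UNIV U" "continuous_on UNIV V" "gd F UH" "gd F VH"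
  shows "gd F (\<lambda>x. (- G x + t *\<^sub>R ((U x - UH x) *\<^sub>R n)) \<bullet> ((V x - VH x) *\<^sub>R n))"
proof -
  obtain h1 h2 where h: "continuous_on UNIV h1" "\<forall>x\<in>F. UH x = h1 x" "continuous_on UNIV h2" "\<forall>x\<in>F. VH x = h2 x"
    using assms(4,5) unfolding gd_def by blast
  show ?thesis unfolding gd_def
    by (rule exI[of _ "\<lambda>x. (- G x + t *\<^sub>R ((U x - h1 x) *\<^sub>R n)) \<bullet> ((V x - h2 x) *\<^sub>R n)"])
       (use h assms(1-3) in \<open>auto intro!: continuous_intros\<close>)
qed

lemma gd_B:
  assumes "continuous_on UNIV G" "continuous_on UNIV U" "gd F UH"
  shows "gd F (\<lambda>x. (- G x) \<bullet> ((U x - UH x) *\<^sub>R n))"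
proof -
  obtain h1 where h: "continuous_on UNIV h1" "\<forall>x\<in>F. UH x = h1 x"
    using assms(3) unfolding gd_def by blast
  show ?thesis unfolding gd_def
    by (rule exI[of _ "\<lambda>x. (- G x) \<bullet> ((U x - h1 x) *\<^sub>R n)"])
       (use h assms(1-2) in \<open>auto intro!: continuous_intros\<close>)
qed

lemma cont_DX:
  assumes u: "\<And>E. poly_fun k (u E)" and v: "\<And>E. poly_fun k (v E)"
  shows "continuous_on UNIV (DX T K a0 CT e u v F)"
proof -
  have cu: "continuous_on UNIV (u E)" "continuous_on UNIV (kgrad K u E)" for E
    using poly_fun_cont kgrad_cont u by blast+
  have cv: "continuous_on UNIV (v E)" "continuous_on UNIV (kgrad K v E)" for E
    using poly_fun_cont kgrad_cont v by blast+
  show ?thesis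
    unfolding DX_def[abs_def] avgstar_vec_def jump_def njump_def
    by (cases "int_face T F") (simp_all, (intro continuous_intros cu cv)+)
qed

lemma cont_Qt:
  assumes v: "\<And>E. poly_fun k (v E)"
  shows "continuous_on UNIV (Qt T K a0 CT e v F)"
proof -
  have cv: "continuous_on UNIV (v E)" "continuous_on UNIV (kgrad K v E)" for E
    using poly_fun_cont kgrad_cont v by blast+
  show ?thesis
    unfolding Qt_def[abs_def] by (intro continuous_intros cv)
qed

lemma gd_uhat:
  assumes u: "\<And>E. poly_fun k (u E)"
  shows "gd F (uhat_of T K a0 CT u F)"
proof -
  have cu: "continuous_on UNIV (u E)" "continuous_on UNIV (kgrad K u E)" for E
    using poly_fun_cont kgrad_cont u by blast+
  show ?thesis
  proof (cases "int_face T F")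
    case True
    have c: "continuous_on UNIV (\<lambda>x. avg T K a0 CT u F x - rho1 T K a0 CT F * njump T (kgrad K u) F x)"
      unfolding avg_def njump_def using True by (simp, (intro continuous_intros cu)+)
    have "\<forall>x\<in>F. uhat_of T K a0 CT u F x = avg T K a0 CT u F x - rho1 T K a0 CT F * njump T (kgrad K u) F x"
      unfolding uhat_of_def using True by simp
    then show ?thesis unfolding gd_def using c by blast
  next
    case False
    show ?thesis unfolding gd_def uhat_of_def using False
      by (intro exI[of _ "\<lambda>x. 0"]) (simp add: continuous_on_const)
  qed
qed

lemma DX_zero: "DX T K a0 CT e u (\<lambda>E x. 0) F x = 0"
  unfolding DX_def avgstar_vec_def jump_def njump_def kgrad_zero by simp

lemma Qt_zero: "Qt T K a0 CT e (\<lambda>E x. 0) F x = 0"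
  unfolding Qt_def kgrad_zero by simp



lemma lin_pair:
  assumes f: "fok F" and I: "finite I" and A: "\<And>E. E \<in> I \<Longrightarrow> gd F (A E)" and B: "\<And>E. E \<in> I \<Longrightarrow> gd F (B E)"
  shows "(\<Sum>E\<in>I. face_int F (A E)) + c * (\<Sum>E\<in>I. face_int F (B E))
       = face_int F (\<lambda>x. (\<Sum>E\<in>I. A E x) + c * (\<Sum>E\<in>I. B E x))"
proof -
  have gA: "gd F (\<lambda>x. \<Sum>E\<in>I. A E x)" by (rule gd_sum[OF I A])
  have gB: "gd F (\<lambda>x. \<Sum>E\<in>I. B E x)" by (rule gd_sum[OF I B])
  have "face_int F (\<lambda>x. (\<Sum>E\<in>I. A E x) + c * (\<Sum>E\<in>I. B E x))
      = face_int F (\<lambda>x. \<Sum>E\<in>I. A E x) + face_int F (\<lambda>x. c * (\<Sum>E\<in>I. B E x))"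
    by (rule face_int_add[OF f gA gd_scale[OF gB]])
  also have "face_int F (\<lambda>x. c * (\<Sum>E\<in>I. B E x)) = c * face_int F (\<lambda>x. \<Sum>E\<in>I. B E x)"
    by (rule face_int_cmult)
  also have "face_int F (\<lambda>x. \<Sum>E\<in>I. A E x) = (\<Sum>E\<in>I. face_int F (A E))"
    by (rule face_int_sum[OF f I A])
  also have "face_int F (\<lambda>x. \<Sum>E\<in>I. B E x) = (\<Sum>E\<in>I. face_int F (B E))"
    by (rule face_int_sum[OF f I B])
  finally show ?thesis by simp
qed

lemma lin4:
  assumes f: "fok F" and g: "gd F P1" "gd F P2" "gd F R" "gd F Q"
  shows "- face_int F P1 + c * (- face_int F P2) + face_int F R - c * (if b then face_int F Q else 0)
       = face_int F (\<lambda>x. - P1 x + c * (- P2 x) + R x - c * (if b then Q x else 0))"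
proof -
  have m1: "face_int F (\<lambda>x. - P1 x) = - face_int F P1" using face_int_cmult[of F "-1" P1] by simp
  have m2: "face_int F (\<lambda>x. c * (- P2 x)) = c * (- face_int F P2)" using face_int_cmult[of F "-c" P2] by simp
  have g1: "gd F (\<lambda>x. - P1 x + c * (- P2 x))" by (intro gd_add gd_minus gd_scale g)
  have g2: "gd F (\<lambda>x. - P1 x + c * (- P2 x) + R x)" by (intro gd_add gd_minus gd_scale g)
  have e1: "face_int F (\<lambda>x. - P1 x + c * (- P2 x) + R x) = - face_int F P1 + c * (- face_int F P2) + face_int F R"
    using face_int_add[OF f g1 g(3)] face_int_add[OF f gd_minus[OF g(1)] gd_scale[OF gd_minus[OF g(2)]]] m1 m2 by simp
  show ?thesis
  proof (cases b)
    case True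
    have "face_int F (\<lambda>x. - P1 x + c * (- P2 x) + R x - c * Q x) = face_int F (\<lambda>x. - P1 x + c * (- P2 x) + R x) - face_int F (\<lambda>x. c * Q x)"
      by (rule face_int_diff[OF f g2 gd_scale[OF g(4)]])
    then show ?thesis using True e1 face_int_cmult[of F c Q] by simp
  next
    case False
    then show ?thesis using e1 by simp
  qed
qed

lemma finite_els: "conforming_simplicial_mesh T \<Omega> \<Longrightarrow> finite (els T F)"
  unfolding els_def using mesh_fin by (metis (no_types, lifting) finite_subset mem_Collect_eq subsetI)

lemma a_hip_eq:
  assumes m: "conforming_simplicial_mesh T \<Omega>" and u: "Vh T k u" and v: "Vh T k v"
    and uh: "\<And>F. F \<in> faces T \<Longrightarrow> gd F (uh F)" and vh: "\<And>F. F \<in> faces T \<Longrightarrow> gd F (vh F)"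
  shows "a_hip T K a0 CT e (u, uh) (v, vh) = (\<Sum>E\<in>T. vol_int E (\<lambda>x. kgrad K u E x \<bullet> grad (v E) x))
     + (\<Sum>F\<in>faces T. face_int F (HX T K a0 CT e u uh v vh F))"
proof -
  let ?V = "(\<Sum>E\<in>T. vol_int E (\<lambda>x. kgrad K u E x \<bullet> grad (v E) x))"
  let ?A = "\<lambda>E F x. (- kgrad K u E x + tau K a0 CT E F *\<^sub>R ((u E x - uh F x) *\<^sub>R onormal E F))
            \<bullet> ((v E x - vh F x) *\<^sub>R onormal E F)"
  let ?B = "\<lambda>E F x. (- kgrad K v E x) \<bullet> ((u E x - uh F x) *\<^sub>R onormal E F)"
  have "a_hip T K a0 CT e (u, uh) (v, vh) = ?V + (\<Sum>F\<in>faces T. \<Sum>E\<in>els T F. face_int F (?A E F))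
       + of_int e * (\<Sum>F\<in>faces T. \<Sum>E\<in>els T F. face_int F (?B E F))"
    unfolding a_hip_def Let_def fst_conv snd_conv reindex[OF m] ..
  also have "\<dots> = ?V + (\<Sum>F\<in>faces T. (\<Sum>E\<in>els T F. face_int F (?A E F)) + of_int e * (\<Sum>E\<in>els T F. face_int F (?B E F)))"
    by (simp add: sum.distrib sum_distrib_left add.assoc)
  also have "(\<Sum>F\<in>faces T. (\<Sum>E\<in>els T F. face_int F (?A E F)) + of_int e * (\<Sum>E\<in>els T F. face_int F (?B E F)))
      = (\<Sum>F\<in>faces T. face_int F (HX T K a0 CT e u uh v vh F))"
  proof (rule sum.cong[OF refl])
    fix F assume F: "F \<in> faces T"
    have cu: "continuous_on UNIV (u E)" "continuous_on UNIV (kgrad K u E)" for E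
      using poly_fun_cont kgrad_cont Vh_poly[OF u] by blast+
    have cv: "continuous_on UNIV (v E)" "continuous_on UNIV (kgrad K v E)" for E
      using poly_fun_cont kgrad_cont Vh_poly[OF v] by blast+
    have "(\<Sum>E\<in>els T F. face_int F (?A E F)) + of_int e * (\<Sum>E\<in>els T F. face_int F (?B E F))
        = face_int F (\<lambda>x. (\<Sum>E\<in>els T F. ?A E F x) + of_int e * (\<Sum>E\<in>els T F. ?B E F x))"
    proof (rule lin_pair[OF faces_fok[OF m F] finite_els[OF m]])
      fix E show "gd F (?A E F)" by (rule gd_A[OF cu(2) cu(1) cv(1) uh[OF F] vh[OF F]])
      show "gd F (?B E F)" by (rule gd_B[OF cv(2) cu(1) uh[OF F]])
    qed
    also have "\<dots> = face_int F (HX T K a0 CT e u uh v vh F)"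
      unfolding HX_def[abs_def] ..
    finally show "(\<Sum>E\<in>els T F. face_int F (?A E F)) + of_int e * (\<Sum>E\<in>els T F. face_int F (?B E F))
        = face_int F (HX T K a0 CT e u uh v vh F)" .
  qed
  finally show ?thesis .
qed

lemma a_dg_eq:
  assumes m: "conforming_simplicial_mesh T \<Omega>" and u: "Vh T k u" and v: "Vh T k v"
  shows "a_dg T K a0 CT e u v = (\<Sum>E\<in>T. vol_int E (\<lambda>x. kgrad K u E x \<bullet> grad (v E) x))
     + (\<Sum>F\<in>faces T. face_int F (DX T K a0 CT e u v F))"
proof -
  let ?V = "(\<Sum>E\<in>T. vol_int E (\<lambda>x. kgrad K u E x \<bullet> grad (v E) x))"
  let ?P1 = "\<lambda>F x. avgstar_vec T K a0 CT (kgrad K u) F x \<bullet> jump T v F x"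
  let ?P2 = "\<lambda>F x. avgstar_vec T K a0 CT (kgrad K v) F x \<bullet> jump T u F x"
  let ?R = "\<lambda>F x. rho0 T K a0 CT F * (jump T u F x \<bullet> jump T v F x)"
  let ?Q = "\<lambda>F x. rho1 T K a0 CT F * njump T (kgrad K u) F x * njump T (kgrad K v) F x"
  have fin: "finite (faces T)" by (rule finite_faces[OF m])
  have filt: "(\<Sum>F\<in>{F\<in>faces T. int_face T F}. face_int F (?Q F)) = (\<Sum>F\<in>faces T. if int_face T F then face_int F (?Q F) else 0)"
    by (rule sum.inter_filter[OF fin])
  have "a_dg T K a0 CT e u v = ?V + (- (\<Sum>F\<in>faces T. face_int F (?P1 F))) + of_int e * (- (\<Sum>F\<in>faces T. face_int F (?P2 F)))
     + ((\<Sum>F\<in>faces T. face_int F (?R F)) - of_int e * (\<Sum>F\<in>faces T. if int_face T F then face_int F (?Q F) else 0))"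
    unfolding a_dg_def a_c_def s_h_def filt ..
  also have "\<dots> = ?V + (\<Sum>F\<in>faces T. - face_int F (?P1 F) + of_int e * (- face_int F (?P2 F)) + face_int F (?R F)
       - of_int e * (if int_face T F then face_int F (?Q F) else 0))"
    by (simp add: sum.distrib sum_subtractf sum_negf sum_distrib_left algebra_simps)
  also have "(\<Sum>F\<in>faces T. - face_int F (?P1 F) + of_int e * (- face_int F (?P2 F)) + face_int F (?R F)
       - of_int e * (if int_face T F then face_int F (?Q F) else 0)) = (\<Sum>F\<in>faces T. face_int F (DX T K a0 CT e u v F))"
  proof (rule sum.cong[OF refl])
    fix F assume F: "F \<in> faces T"
    have cu: "continuous_on UNIV (u E)" "continuous_on UNIV (kgrad K u E)" for E
      using poly_fun_cont kgrad_cont Vh_poly[OF u] by blast+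
    have cv: "continuous_on UNIV (v E)" "continuous_on UNIV (kgrad K v E)" for E
      using poly_fun_cont kgrad_cont Vh_poly[OF v] by blast+
    have g1: "gd F (?P1 F)" unfolding avgstar_vec_def jump_def
      by (rule gd_cont, cases "int_face T F") (simp_all, (intro continuous_intros cu cv)+)
    have g2: "gd F (?P2 F)" unfolding avgstar_vec_def jump_def
      by (rule gd_cont, cases "int_face T F") (simp_all, (intro continuous_intros cu cv)+)
    have g3: "gd F (?R F)" unfolding jump_def
      by (rule gd_cont) (intro continuous_intros cu cv)
    have g4: "gd F (?Q F)" unfolding njump_def
      by (rule gd_cont) (intro continuous_intros cu cv)
    show "- face_int F (?P1 F) + of_int e * (- face_int F (?P2 F)) + face_int F (?R F)
       - of_int e * (if int_face T F then face_int F (?Q F) else 0) = face_int F (DX T K a0 CT e u v F)"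
      unfolding lin4[OF faces_fok[OF m F] g1 g2 g3 g4] DX_def[abs_def] ..
  qed
  finally show ?thesis .
qed



lemma PW:
  assumes m: "conforming_simplicial_mesh T \<Omega>"
    and tp: "\<And>E F. E \<in> T \<Longrightarrow> F facet_of E \<Longrightarrow> tau K a0 CT E F > 0"
    and F: "F \<in> faces T" and x: "x \<in> F"
    and bd: "\<not> int_face T F \<Longrightarrow> uh F x = 0 \<and> vh F x = 0"
  shows "HX T K a0 CT e u uh v vh F x = DX T K a0 CT e u v F x
     + (uh F x - uhat_of T K a0 CT u F x) * Qt T K a0 CT e v F x
     - vh F x * (\<Sum>E\<in>els T F. tau K a0 CT E F) * (uhat_of T K a0 CT u F x - uh F x)"
proof (cases "int_face T F")
  case True
  obtain E1 E2 where E: "E1 \<noteq> E2" "els T F = {E1, E2}" "E1 \<in> T" "E2 \<in> T" "F facet_of E1" "F facet_of E2"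
    "onormal E2 F = - onormal E1 F" by (rule els_int[OF m True])
  have n1: "norm (onormal E1 F) = 1" by (rule facet_basic(1)[OF mesh_simplex[OF m E(3)] E(5)])
  have S: "tau K a0 CT E1 F + tau K a0 CT E2 F \<noteq> 0" using tp[OF E(3,5)] tp[OF E(4,6)] by simp
  show ?thesis by (rule pw_int[OF E(2,1,7) n1 True x S])
next
  case False
  obtain E where E: "els T F = {E}" "E \<in> T" "F facet_of E" by (rule els_bdry[OF m F False])
  have n1: "norm (onormal E F) = 1" by (rule facet_basic(1)[OF mesh_simplex[OF m E(2)] E(3)])
  have z: "uh F x = 0" "vh F x = 0" using bd False by auto
  have u0: "uhat_of T K a0 CT u F x = 0" unfolding uhat_of_def using False by simp
  show ?thesis using pw_bdry[where uh=uh and vh=vh and x=x and e=e and u=u and v=v, OF E(1) False n1 z] z u0 by simp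
qed

lemma Vhat_gd: "Vhat T k w \<Longrightarrow> F \<in> faces T \<Longrightarrow> gd F (w F)"
  unfolding Vhat_def gd_def using poly_fun_cont by blast

lemma Vhat_bd: "Vhat T k w \<Longrightarrow> \<not> int_face T F \<Longrightarrow> w F x = 0"
  unfolding Vhat_def bdry_face_def by metis

lemma Vhat_zero: "Vhat T k (\<lambda>F x. 0)"
  unfolding Vhat_def using poly_fun_zero by blast

lemma Vh_zero: "Vh T k (\<lambda>E x. 0)"
  unfolding Vh_def using poly_fun_zero by blast

lemma int_face_faces: "int_face T F \<Longrightarrow> F \<in> faces T"
  unfolding int_face_def by blast

lemma poly_fun_diff: "poly_fun k p \<Longrightarrow> poly_fun k q \<Longrightarrow> poly_fun k (\<lambda>x. p x - q x)"
  using poly_fun_add[of k p "\<lambda>x. (-1) * q x"] poly_fun_scale[of k q "-1"] by simp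

lemma Vhat_uhat:
  assumes m: "conforming_simplicial_mesh T \<Omega>" and u: "Vh T k u"
  shows "Vhat T k (uhat_of T K a0 CT u)"
proof -
  have pu: "poly_fun k (u E)" for E by (rule Vh_poly[OF u])
  have P: "\<exists>p. poly_fun k p \<and> (\<forall>x\<in>F. uhat_of T K a0 CT u F x = p x)" for F
  proof (cases "int_face T F")
    case True
    let ?p = "\<lambda>y. (\<Sum>E\<in>els T F. omg T K a0 CT E F * u E y) - rho1 T K a0 CT F * (\<Sum>E\<in>els T F. (K E *v grad (u E) y) \<bullet> onormal E F)"
    have a: "poly_fun k (\<lambda>y. \<Sum>E\<in>els T F. omg T K a0 CT E F * u E y)"
      by (rule poly_fun_sum[OF finite_els[OF m]]) (rule poly_fun_scale[OF pu])
    have b: "poly_fun k (\<lambda>y. \<Sum>E\<in>els T F. (K E *v grad (u E) y) \<bullet> onormal E F)"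
      by (rule poly_fun_sum[OF finite_els[OF m]]) (rule poly_kgrad[OF pu])
    have "poly_fun k ?p" by (rule poly_fun_diff[OF a poly_fun_scale[OF b]])
    moreover have "\<forall>x\<in>F. uhat_of T K a0 CT u F x = ?p x"
      unfolding uhat_of_def avg_def njump_def kgrad_def using True by simp
    ultimately show ?thesis by blast
  next
    case False
    then have "\<forall>x\<in>F. uhat_of T K a0 CT u F x = 0" unfolding uhat_of_def by simp
    then show ?thesis using poly_fun_zero by blast
  qed
  show ?thesis unfolding Vhat_def
  proof (intro conjI allI ballI impI)
    fix F assume "F \<in> faces T"
    show "\<exists>p. poly_fun k p \<and> (\<forall>x\<in>F. uhat_of T K a0 CT u F x = p x)" by (rule P)
  next
    fix F x assume "F \<in> faces T" "x \<notin> F"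
    then show "uhat_of T K a0 CT u F x = 0" unfolding uhat_of_def by simp
  next
    fix F assume "F \<notin> faces T"
    then show "uhat_of T K a0 CT u F = (\<lambda>_. 0)" unfolding uhat_of_def using int_face_faces by fastforce
  next
    fix F assume "bdry_face T F"
    then show "uhat_of T K a0 CT u F = (\<lambda>_. 0)" unfolding uhat_of_def bdry_face_def by fastforce
  qed
qed



lemma Vhat_w:
  assumes m: "conforming_simplicial_mesh T \<Omega>" and v: "Vh T k v"
  shows "Vhat T k (\<lambda>G y. if int_face T G \<and> y \<in> G then Qt T K a0 CT e v G y / (\<Sum>E\<in>els T G. tau K a0 CT E G) else 0)"
    (is "Vhat T k ?w")
proof -
  have pv: "poly_fun k (v E)" for E by (rule Vh_poly[OF v])
  have P: "\<exists>p. poly_fun k p \<and> (\<forall>x\<in>F. ?w F x = p x)" for F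
  proof (cases "int_face T F")
    case True
    let ?p = "\<lambda>y. (1 / (\<Sum>E\<in>els T F. tau K a0 CT E F)) * (\<Sum>E\<in>els T F. - tau K a0 CT E F * v E y + of_int e * ((K E *v grad (v E) y) \<bullet> onormal E F))"
    have "poly_fun k ?p"
    proof (rule poly_fun_scale, rule poly_fun_sum[OF finite_els[OF m]], rule poly_fun_add)
      fix E
      show "poly_fun k (\<lambda>x. - tau K a0 CT E F * v E x)" by (rule poly_fun_scale[OF pv])
      show "poly_fun k (\<lambda>x. real_of_int e * ((K E *v grad (v E) x) \<bullet> onormal E F))"
        by (rule poly_fun_scale[OF poly_kgrad[OF pv]])
    qed
    moreover have "\<forall>x\<in>F. ?w F x = ?p x"
      unfolding Qt_def kgrad_def using True by simp
    ultimately show ?thesis by blast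
  next
    case False
    then have "\<forall>x\<in>F. ?w F x = 0" by simp
    then show ?thesis using poly_fun_zero by blast
  qed
  show ?thesis unfolding Vhat_def
  proof (intro conjI allI ballI impI)
    fix F assume "F \<in> faces T"
    show "\<exists>p. poly_fun k p \<and> (\<forall>x\<in>F. ?w F x = p x)" by (rule P)
  next
    fix F x assume "F \<in> faces T" "x \<notin> F"
    then show "?w F x = 0" by simp
  next
    fix F assume "F \<notin> faces T"
    then show "?w F = (\<lambda>_. 0)" using int_face_faces by fastforce
  next
    fix F assume "bdry_face T F"
    then show "?w F = (\<lambda>_. 0)" unfolding bdry_face_def by fastforce
  qed
qed

lemma rhs_zero: "rhs T f (\<lambda>E x. 0) = 0"
  unfolding rhs_def vol_int_def by simp

lemma vol_zero: "(\<Sum>E\<in>T. vol_int E (\<lambda>x. kgrad K u E x \<bullet> grad ((\<lambda>E x. 0) E) x)) = 0"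
  unfolding vol_int_def grad_zero by simp



theorem mainTheorem4:
  fixes \<Omega> :: "(real^'d) set"
    and T :: "(real^'d) set set"
    and \<kappa> :: "real^'d \<Rightarrow> real^'d^'d"
    and K :: "(real^'d) set \<Rightarrow> real^'d^'d"
    and \<kappa>min \<kappa>max CT \<alpha>0 :: real
    and k :: nat
    and \<epsilon> :: int
    and f :: "real^'d \<Rightarrow> real"
  assumes dim: "CARD('d) \<in> {2, 3}"
    and dom: "lipschitz_domain \<Omega>" "polyhedral_domain \<Omega>"
    and mesh: "conforming_simplicial_mesh T \<Omega>"
    and h_le: "\<forall>E\<in>T. diameter E \<le> 1"
    and kbounds: "0 < \<kappa>min" "\<kappa>min \<le> \<kappa>max"
    and kappa_pc: "\<forall>E\<in>T. \<forall>x\<in>interior E. \<kappa> x = K E"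
    and kappa_prop: "AE x in lebesgue. x \<in> \<Omega> \<longrightarrow>
          transpose (\<kappa> x) = \<kappa> x \<and>
          (\<forall>\<xi>. \<kappa>min * (\<xi> \<bullet> \<xi>) \<le> \<xi> \<bullet> (\<kappa> x *v \<xi>) \<and> \<xi> \<bullet> (\<kappa> x *v \<xi>) \<le> \<kappa>max * (\<xi> \<bullet> \<xi>))"
    and CT: "CT > 0"
    and trace_ineq: "\<forall>E\<in>T. \<forall>F\<in>elem_faces E. \<forall>w. poly_fun k w \<longrightarrow>
          face_int F (\<lambda>x. (w x)\<^sup>2) \<le> CT\<^sup>2 / diameter E * vol_int E (\<lambda>x. (w x)\<^sup>2)"
    and alpha0: "\<alpha>0 > 0"
    and k: "k \<ge> 1"
    and eps: "\<epsilon> \<in> {-1, 0, 1}"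
    and f_L2: "set_borel_measurable lebesgue \<Omega> f" "set_integrable lebesgue \<Omega> (\<lambda>x. (f x)\<^sup>2)"
  shows "(\<forall>u uh. hip_solution T K \<alpha>0 CT \<epsilon> k f (u, uh) \<longrightarrow> dg_solution T K \<alpha>0 CT \<epsilon> k f u)
       \<and> (\<forall>u. dg_solution T K \<alpha>0 CT \<epsilon> k f u \<longrightarrow>
            Vhat T k (uhat_of T K \<alpha>0 CT u) \<and>
            hip_solution T K \<alpha>0 CT \<epsilon> k f (u, uhat_of T K \<alpha>0 CT u) \<and>
            ((\<exists>!w. hip_solution T K \<alpha>0 CT \<epsilon> k f w) \<longrightarrow>
               (THE w. hip_solution T K \<alpha>0 CT \<epsilon> k f w) = (u, uhat_of T K \<alpha>0 CT u)))"
proof -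
  have m: "conforming_simplicial_mesh T \<Omega>" by (rule mesh)
  have Kp: "\<forall>\<xi>. \<kappa>min * (\<xi> \<bullet> \<xi>) \<le> \<xi> \<bullet> (K E *v \<xi>)" if "E \<in> T" for E
    using K_pos[OF dom(1) mesh kappa_pc kappa_prop that] by blast
  have tp: "tau K \<alpha>0 CT E F > 0" if "E \<in> T" "F facet_of E" for E F
    by (rule tau_pos[where K=K, OF m that Kp[OF that(1)] kbounds(1) alpha0 CT])
  have Spos: "(\<Sum>E\<in>els T F. tau K \<alpha>0 CT E F) \<noteq> 0" if i: "int_face T F" for F
  proof -
    obtain E1 E2 where E: "E1 \<noteq> E2" "els T F = {E1, E2}" "E1 \<in> T" "E2 \<in> T" "F facet_of E1" "F facet_of E2"
      "onormal E2 F = - onormal E1 F" by (rule els_int[OF m i])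
    have "tau K \<alpha>0 CT E1 F > 0" "tau K \<alpha>0 CT E2 F > 0" using tp E by auto
    then show ?thesis using E(1,2) by simp
  qed
  have partii: "Vhat T k (uhat_of T K \<alpha>0 CT u) \<and> hip_solution T K \<alpha>0 CT \<epsilon> k f (u, uhat_of T K \<alpha>0 CT u)"
    if dg: "dg_solution T K \<alpha>0 CT \<epsilon> k f u" for u
  proof -
    have u: "Vh T k u" using dg unfolding dg_solution_def by blast
    have uhr: "Vhat T k (uhat_of T K \<alpha>0 CT u)" by (rule Vhat_uhat[OF m u])
    have "a_hip T K \<alpha>0 CT \<epsilon> (u, uhat_of T K \<alpha>0 CT u) (v, vh) = rhs T f v"
      if v: "Vh T k v" and vh: "Vhat T k vh" for v vh
    proof -
      have "a_hip T K \<alpha>0 CT \<epsilon> (u, uhat_of T K \<alpha>0 CT u) (v, vh)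
          = (\<Sum>E\<in>T. vol_int E (\<lambda>x. kgrad K u E x \<bullet> grad (v E) x))
            + (\<Sum>F\<in>faces T. face_int F (HX T K \<alpha>0 CT \<epsilon> u (uhat_of T K \<alpha>0 CT u) v vh F))"
        by (rule a_hip_eq[OF m u v Vhat_gd[OF uhr] Vhat_gd[OF vh]])
      also have "(\<Sum>F\<in>faces T. face_int F (HX T K \<alpha>0 CT \<epsilon> u (uhat_of T K \<alpha>0 CT u) v vh F))
          = (\<Sum>F\<in>faces T. face_int F (DX T K \<alpha>0 CT \<epsilon> u v F))"
      proof (rule sum.cong[OF refl], rule face_int_cong[OF faces_fok[OF m]])
        fix F x assume F: "F \<in> faces T" and x: "x \<in> F"
        have bd: "uhat_of T K \<alpha>0 CT u F x = 0 \<and> vh F x = 0" if "\<not> int_face T F"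
          using that Vhat_bd[OF vh] unfolding uhat_of_def by simp
        show "HX T K \<alpha>0 CT \<epsilon> u (uhat_of T K \<alpha>0 CT u) v vh F x = DX T K \<alpha>0 CT \<epsilon> u v F x"
          using PW[where uh="uhat_of T K \<alpha>0 CT u" and vh=vh and u=u and v=v and e=\<epsilon>, OF m tp F x bd] by simp
      qed simp
      also have "(\<Sum>E\<in>T. vol_int E (\<lambda>x. kgrad K u E x \<bullet> grad (v E) x)) + \<dots> = a_dg T K \<alpha>0 CT \<epsilon> u v"
        by (rule a_dg_eq[OF m u v, symmetric])
      also have "\<dots> = rhs T f v" using dg v unfolding dg_solution_def by blast
      finally show ?thesis .
    qed
    then show ?thesis unfolding hip_solution_def using u uhr by simp
  qed
  have parti: "dg_solution T K \<alpha>0 CT \<epsilon> k f u" if hip: "hip_solution T K \<alpha>0 CT \<epsilon> k f (u, uh)" for u uh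
  proof -
    have u: "Vh T k u" and uh: "Vhat T k uh"
      and sol: "\<And>v vh. Vh T k v \<Longrightarrow> Vhat T k vh \<Longrightarrow> a_hip T K \<alpha>0 CT \<epsilon> (u, uh) (v, vh) = rhs T f v"
      using hip unfolding hip_solution_def by auto
    let ?ur = "uhat_of T K \<alpha>0 CT u"
    have pu: "\<And>E. poly_fun k (u E)" by (rule Vh_poly[OF u])
    have "a_dg T K \<alpha>0 CT \<epsilon> u v = rhs T f v" if v: "Vh T k v" for v
    proof -
      have pv: "\<And>E. poly_fun k (v E)" by (rule Vh_poly[OF v])
      let ?Z = "\<lambda>F x. (uh F x - ?ur F x) * Qt T K \<alpha>0 CT \<epsilon> v F x"
      have gZ: "gd F (?Z F)" if "F \<in> faces T" for F
        by (rule gd_mult[OF gd_diff[OF Vhat_gd[OF uh that] gd_uhat[OF pu]] gd_cont[OF cont_Qt[OF pv]]])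
      have "rhs T f v = a_hip T K \<alpha>0 CT \<epsilon> (u, uh) (v, \<lambda>F x. 0)" using sol[OF v Vhat_zero] by simp
      also have "\<dots> = (\<Sum>E\<in>T. vol_int E (\<lambda>x. kgrad K u E x \<bullet> grad (v E) x))
            + (\<Sum>F\<in>faces T. face_int F (HX T K \<alpha>0 CT \<epsilon> u uh v (\<lambda>F x. 0) F))"
        by (rule a_hip_eq[OF m u v Vhat_gd[OF uh] Vhat_gd[OF Vhat_zero]])
      also have "(\<Sum>F\<in>faces T. face_int F (HX T K \<alpha>0 CT \<epsilon> u uh v (\<lambda>F x. 0) F))
          = (\<Sum>F\<in>faces T. face_int F (DX T K \<alpha>0 CT \<epsilon> u v F) + face_int F (?Z F))"
      proof (rule sum.cong[OF refl])
        fix F assume F: "F \<in> faces T"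
        have "face_int F (HX T K \<alpha>0 CT \<epsilon> u uh v (\<lambda>F x. 0) F) = face_int F (\<lambda>x. DX T K \<alpha>0 CT \<epsilon> u v F x + ?Z F x)"
        proof (rule face_int_cong[OF faces_fok[OF m F]])
          fix x assume x: "x \<in> F"
          have bd: "uh F x = 0 \<and> (\<lambda>F x. 0::real) F x = 0" if "\<not> int_face T F"
            using that Vhat_bd[OF uh] by simp
          show "HX T K \<alpha>0 CT \<epsilon> u uh v (\<lambda>F x. 0) F x = DX T K \<alpha>0 CT \<epsilon> u v F x + ?Z F x"
            using PW[where uh=uh and vh="\<lambda>F x. 0" and u=u and v=v and e=\<epsilon>, OF m tp F x bd] by simp
        qed
        also have "\<dots> = face_int F (DX T K \<alpha>0 CT \<epsilon> u v F) + face_int F (?Z F)"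
          by (rule face_int_add[OF faces_fok[OF m F] gd_cont[OF cont_DX[OF pu pv]] gZ[OF F]])
        finally show "face_int F (HX T K \<alpha>0 CT \<epsilon> u uh v (\<lambda>F x. 0) F) = face_int F (DX T K \<alpha>0 CT \<epsilon> u v F) + face_int F (?Z F)" .
      qed
      also have "\<dots> = (\<Sum>F\<in>faces T. face_int F (DX T K \<alpha>0 CT \<epsilon> u v F)) + (\<Sum>F\<in>faces T. face_int F (?Z F))"
        by (rule sum.distrib)
      finally have h1: "rhs T f v = a_dg T K \<alpha>0 CT \<epsilon> u v + (\<Sum>F\<in>faces T. face_int F (?Z F))"
        using a_dg_eq[OF m u v] by simp
      define w where "w = (\<lambda>G y. if int_face T G \<and> y \<in> G then Qt T K \<alpha>0 CT \<epsilon> v G y / (\<Sum>E\<in>els T G. tau K \<alpha>0 CT E G) else 0)"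
      have w: "Vhat T k w" unfolding w_def by (rule Vhat_w[OF m v])
      have "0 = rhs T f (\<lambda>E x. 0)" by (simp add: rhs_zero)
      also have "\<dots> = a_hip T K \<alpha>0 CT \<epsilon> (u, uh) (\<lambda>E x. 0, w)" using sol[OF Vh_zero w] by simp
      also have "\<dots> = (\<Sum>E\<in>T. vol_int E (\<lambda>x. kgrad K u E x \<bullet> grad ((\<lambda>E x. 0) E) x))
            + (\<Sum>F\<in>faces T. face_int F (HX T K \<alpha>0 CT \<epsilon> u uh (\<lambda>E x. 0) w F))"
        by (rule a_hip_eq[OF m u Vh_zero Vhat_gd[OF uh] Vhat_gd[OF w]])
      also have "(\<Sum>F\<in>faces T. face_int F (HX T K \<alpha>0 CT \<epsilon> u uh (\<lambda>E x. 0) w F))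
           = (\<Sum>F\<in>faces T. face_int F (?Z F))"
      proof (rule sum.cong[OF refl], rule face_int_cong[OF faces_fok[OF m]])
        fix F x assume F: "F \<in> faces T" and x: "x \<in> F"
        have bd: "uh F x = 0 \<and> w F x = 0" if "\<not> int_face T F"
          using that Vhat_bd[OF uh] Vhat_bd[OF w] by simp
        have e: "HX T K \<alpha>0 CT \<epsilon> u uh (\<lambda>E x. 0) w F x
          = - w F x * (\<Sum>E\<in>els T F. tau K \<alpha>0 CT E F) * (?ur F x - uh F x)"
          using PW[where uh=uh and vh=w and u=u and v="\<lambda>E x. 0" and e=\<epsilon>, OF m tp F x bd]
            DX_zero[of T K \<alpha>0 CT \<epsilon> u F x] Qt_zero[of T K \<alpha>0 CT \<epsilon> F x] by simp
        show "HX T K \<alpha>0 CT \<epsilon> u uh (\<lambda>E x. 0) w F x = ?Z F x"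
        proof (cases "int_face T F")
          case True
          have "w F x = Qt T K \<alpha>0 CT \<epsilon> v F x / (\<Sum>E\<in>els T F. tau K \<alpha>0 CT E F)"
            unfolding w_def using True x by simp
          then show ?thesis unfolding e using Spos[OF True] by (simp add: field_simps)
        next
          case False
          have "w F x = 0" "uh F x = 0" using bd False by auto
          moreover have "?ur F x = 0" unfolding uhat_of_def using False by simp
          ultimately show ?thesis unfolding e by simp
        qed
      qed simp
      finally have "(\<Sum>F\<in>faces T. face_int F (?Z F)) = 0" using vol_zero[of K u T] by simp
      then show ?thesis using h1 by simp
    qed
    then show ?thesis unfolding dg_solution_def using u by blast
  qed
  show ?thesis
  proof (intro conjI allI impI)
    fix u uh assume "hip_solution T K \<alpha>0 CT \<epsilon> k f (u, uh)"
    then show "dg_solution T K \<alpha>0 CT \<epsilon> k f u" by (rule parti)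
  next
    fix u assume "dg_solution T K \<alpha>0 CT \<epsilon> k f u"
    then show "Vhat T k (uhat_of T K \<alpha>0 CT u)" using partii by blast
  next
    fix u assume "dg_solution T K \<alpha>0 CT \<epsilon> k f u"
    then show "hip_solution T K \<alpha>0 CT \<epsilon> k f (u, uhat_of T K \<alpha>0 CT u)" using partii by blast
  next
    fix u assume d: "dg_solution T K \<alpha>0 CT \<epsilon> k f u" and ex: "\<exists>!w. hip_solution T K \<alpha>0 CT \<epsilon> k f w"
    show "(THE w. hip_solution T K \<alpha>0 CT \<epsilon> k f w) = (u, uhat_of T K \<alpha>0 CT u)"
      by (rule the1_equality[OF ex]) (use partii[OF d] in blast)
  qed
qed



end
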